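(* Let $\lambda>0$, $c>0$, $0<p<1$, and let $\big(X(t),Y(t)\big)$ be the planar orthogonal random motion described in the context. Then for all real $\alpha,\beta$ and $t>0$, \begin{align*}\mathbb{E}\left[e^{i\alpha X(t)+i\beta Y(t)}\right]=\frac{e^{-\lambda t}}{4}\Bigg\{&\left(1+\frac{\lambda p}{A(\alpha,\beta)}\right)e^{A(\alpha,\beta)t}+\left(1-\frac{\lambda p}{A(\alpha,\beta)}\right)e^{-A(\alpha,\beta)t}\Bigg\}\\ &\cdot\Bigg\{\left(1+\frac{\lambda (1-p)}{B(\alpha,\beta)}\right)e^{B(\alpha,\beta)t}+\left(1-\frac{\lambda (1-p)}{B(\alpha,\beta)}\right)e^{-B(\alpha,\beta)t}\Bigg\},\end{align*} where $A(\alpha,\beta)=\frac{1}{2}\sqrt{4\lambda^2p^2-c^2(\alpha-\beta)^2}$ and $B(\alpha,\beta)=\frac{1}{2}\sqrt{4\lambda^2(1-p)^2-c^2(\alpha+\beta)^2}$.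
   Context: Directions: $d_j=\big(\cos(\pi j/2),\sin(\pi j/2)\big)$, $j=0,1,2,3$, indices taken mod 4. Let $N(t)$ be a homogeneous Poisson process of rate $\lambda>0$. The direction process $D(t)$ takes values in $\{d_0,d_1,d_2,d_3\}$, $D(0)$ is uniformly distributed on the four directions, and $D$ changes only at the Poisson event times as follows: if the current direction is horizontal ($d_0$ or $d_2$), it turns counterclockwise ($d_j\to d_{j+1}$) with probability $p$ and clockwise ($d_j\to d_{j-1}$) with probability $1-p$; if the current direction is vertical ($d_1$ or $d_3$), it turns counterclockwise with probability $1-p$ and clockwise with probability $p$ (choices independent of everything else). Equivalently $D$ is a continuous-time Markov chain with generator $G=\begin{pmatrix}-\lambda & \lambda p & 0 & \lambda(1-p)\\ \lambda p & -\lambda & \lambda(1-p) & 0\\ 0 & \lambda(1-p) & -\lambda & \lambda p\\ \lambda(1-p) & 0 & \lambda p & -\lambda\end{pmatrix}$ on states $(d_0,d_1,d_2,d_3)$. The position is $\big(X(t),Y(t)\big)=c\int_0^t D(\tau)\,d\tau$, starting at the origin, with constant speed $c>0$. Square roots are principal branches; the expressions are understood by continuity where $A$ or $B$ vanishes. *)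

theory Defs
  imports "HOL-Probability.Probability"
begin

text \<open>Sources of randomness: initial direction, i.i.d. exponential
inter-arrival times of the Poisson process, i.i.d. turn choices.\<close>
datatype src = Dir0 | Wait nat | Turn nat

text \<open>All sources combined into one real-valued family (for stating joint independence).\<close>
definition src_rv :: "('a \<Rightarrow> nat) \<Rightarrow> (nat \<Rightarrow> 'a \<Rightarrow> real) \<Rightarrow> (nat \<Rightarrow> 'a \<Rightarrow> bool) \<Rightarrow> src \<Rightarrow> 'a \<Rightarrow> real" where
  "src_rv D0 \<tau> \<xi> i \<omega> = (case i of Dir0 \<Rightarrow> real (D0 \<omega>) | Wait k \<Rightarrow> \<tau> k \<omega> | Turn k \<Rightarrow> of_bool (\<xi> k \<omega>))"

definition jump_time :: "(nat \<Rightarrow> 'a \<Rightarrow> real) \<Rightarrow> nat \<Rightarrow> 'a \<Rightarrow> real" where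
  "jump_time \<tau> n \<omega> = (\<Sum>k<n. \<tau> k \<omega>)"

definition poisson_count :: "(nat \<Rightarrow> 'a \<Rightarrow> real) \<Rightarrow> real \<Rightarrow> 'a \<Rightarrow> nat" where
  "poisson_count \<tau> t \<omega> = card {n::nat. 1 \<le> n \<and> jump_time \<tau> n \<omega> \<le> t}"

text \<open>Direction index (j for d_j) after n turns. At the (n+1)-th event, the choice \<xi> n is used:
 \<xi> n = True (probability p) means counterclockwise if horizontal, clockwise if vertical.\<close>
fun dir_seq :: "('a \<Rightarrow> nat) \<Rightarrow> (nat \<Rightarrow> 'a \<Rightarrow> bool) \<Rightarrow> nat \<Rightarrow> 'a \<Rightarrow> nat" where
  "dir_seq D0 \<xi> 0 \<omega> = D0 \<omega> mod 4"
| "dir_seq D0 \<xi> (Suc n) \<omega> =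
     (let j = dir_seq D0 \<xi> n \<omega> in
      if even j then (if \<xi> n \<omega> then (j + 1) mod 4 else (j + 3) mod 4)
      else (if \<xi> n \<omega> then (j + 3) mod 4 else (j + 1) mod 4))"

definition dir_index :: "('a \<Rightarrow> nat) \<Rightarrow> (nat \<Rightarrow> 'a \<Rightarrow> real) \<Rightarrow> (nat \<Rightarrow> 'a \<Rightarrow> bool) \<Rightarrow> real \<Rightarrow> 'a \<Rightarrow> nat" where
  "dir_index D0 \<tau> \<xi> t \<omega> = dir_seq D0 \<xi> (poisson_count \<tau> t \<omega>) \<omega>"

definition dir_vec :: "nat \<Rightarrow> real \<times> real" where
  "dir_vec j = (cos (pi * real j / 2), sin (pi * real j / 2))"

definition posX :: "real \<Rightarrow> ('a \<Rightarrow> nat) \<Rightarrow> (nat \<Rightarrow> 'a \<Rightarrow> real) \<Rightarrow> (nat \<Rightarrow> 'a \<Rightarrow> bool) \<Rightarrow> real \<Rightarrow> 'a \<Rightarrow> real" where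
  "posX c D0 \<tau> \<xi> t \<omega> = c * integral {0..t} (\<lambda>s. fst (dir_vec (dir_index D0 \<tau> \<xi> s \<omega>)))"

definition posY :: "real \<Rightarrow> ('a \<Rightarrow> nat) \<Rightarrow> (nat \<Rightarrow> 'a \<Rightarrow> real) \<Rightarrow> (nat \<Rightarrow> 'a \<Rightarrow> bool) \<Rightarrow> real \<Rightarrow> 'a \<Rightarrow> real" where
  "posY c D0 \<tau> \<xi> t \<omega> = c * integral {0..t} (\<lambda>s. snd (dir_vec (dir_index D0 \<tau> \<xi> s \<omega>)))"

text \<open>(1 + k/a) e^{a t} + (1 - k/a) e^{-a t}, extended by continuity at a = 0 (value 2 + 2 k t).\<close>
definition phi :: "complex \<Rightarrow> real \<Rightarrow> real \<Rightarrow> complex" where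
  "phi a k t = (if a = 0 then 2 + 2 * of_real k * of_real t
               else (1 + of_real k / a) * exp (a * of_real t) + (1 - of_real k / a) * exp (- a * of_real t))"

definition Afun :: "real \<Rightarrow> real \<Rightarrow> real \<Rightarrow> real \<Rightarrow> real \<Rightarrow> complex" where
  "Afun lam p c \<alpha> \<beta> = csqrt (of_real (4 * lam^2 * p^2 - c^2 * (\<alpha> - \<beta>)^2)) / 2"

definition Bfun :: "real \<Rightarrow> real \<Rightarrow> real \<Rightarrow> real \<Rightarrow> real \<Rightarrow> complex" where
  "Bfun lam p c \<alpha> \<beta> = csqrt (of_real (4 * lam^2 * (1 - p)^2 - c^2 * (\<alpha> + \<beta>)^2)) / 2"

end

theory Submission
  imports Defs
begin

definition th :: "real \<Rightarrow> real \<Rightarrow> nat \<Rightarrow> real" where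
  "th a b j = a * cos (pi * real j / 2) + b * sin (pi * real j / 2)"

definition stp :: "nat \<Rightarrow> bool \<Rightarrow> nat" where
  "stp j b = (if even j then (if b then (j + 1) mod 4 else (j + 3) mod 4)
              else (if b then (j + 3) mod 4 else (j + 1) mod 4))"

fun dseq :: "nat \<Rightarrow> (nat \<Rightarrow> bool) \<Rightarrow> nat \<Rightarrow> nat" where
  "dseq j x 0 = j"
| "dseq j x (Suc k) = stp (dseq j x k) (x k)"

lemma dir_seq_dseq: "dir_seq D0 \<xi> n \<omega> = dseq (D0 \<omega> mod 4) (\<lambda>k. \<xi> k \<omega>) n"
  by (induction n) (simp_all add: stp_def Let_def)

lemma dseq_shift: "dseq j x (Suc k) = dseq (stp j (x 0)) (\<lambda>i. x (Suc i)) k"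
  by (induction k) simp_all

fun H :: "real \<Rightarrow> real \<Rightarrow> real \<Rightarrow> nat \<Rightarrow> nat \<Rightarrow> real \<Rightarrow> (nat \<Rightarrow> real) \<Rightarrow> (nat \<Rightarrow> bool) \<Rightarrow> complex" where
  "H c a b 0 j t \<tau> x = (if 0 \<le> t \<and> t < \<tau> 0 then cis (c * t * th a b j) else 0)"
| "H c a b (Suc n) j t \<tau> x = (if 0 \<le> \<tau> 0 \<and> \<tau> 0 \<le> t then
      cis (c * \<tau> 0 * th a b j) * H c a b n (stp j (x 0)) (t - \<tau> 0) (\<lambda>k. \<tau> (Suc k)) (\<lambda>k. x (Suc k)) else 0)"

definition ev :: "nat \<Rightarrow> real \<Rightarrow> (nat \<Rightarrow> real) \<Rightarrow> bool" where
  "ev n t \<tau> \<longleftrightarrow> (\<forall>k<n. 0 \<le> \<tau> k) \<and> (\<Sum>k<n. \<tau> k) \<le> t \<and> t < (\<Sum>k<Suc n. \<tau> k)"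

definition phase :: "real \<Rightarrow> real \<Rightarrow> real \<Rightarrow> nat \<Rightarrow> nat \<Rightarrow> real \<Rightarrow> (nat \<Rightarrow> real) \<Rightarrow> (nat \<Rightarrow> bool) \<Rightarrow> real" where
  "phase c a b n j t \<tau> x = c * ((\<Sum>k<n. \<tau> k * th a b (dseq j x k)) + (t - (\<Sum>k<n. \<tau> k)) * th a b (dseq j x n))"

lemma ev_Suc: "ev (Suc n) t \<tau> \<longleftrightarrow> 0 \<le> \<tau> 0 \<and> \<tau> 0 \<le> t \<and> ev n (t - \<tau> 0) (\<lambda>k. \<tau> (Suc k))"
proof -
  have s1: "(\<Sum>k<Suc n. \<tau> k) = \<tau> 0 + (\<Sum>k<n. \<tau> (Suc k))" by (rule sum.lessThan_Suc_shift)
  have s2: "(\<Sum>k<Suc (Suc n). \<tau> k) = \<tau> 0 + (\<Sum>k<Suc n. \<tau> (Suc k))" by (rule sum.lessThan_Suc_shift)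
  have a: "(\<forall>k<Suc n. 0 \<le> \<tau> k) \<longleftrightarrow> 0 \<le> \<tau> 0 \<and> (\<forall>k<n. 0 \<le> \<tau> (Suc k))"
    using less_Suc_eq_0_disj by auto
  have nn: "(\<forall>k<n. 0 \<le> \<tau> (Suc k)) \<Longrightarrow> 0 \<le> (\<Sum>k<n. \<tau> (Suc k))"
    by (rule sum_nonneg) auto
  show ?thesis unfolding ev_def s1 s2 a using nn by auto
qed

lemma ev_0: "ev 0 t \<tau> \<longleftrightarrow> 0 \<le> t \<and> t < \<tau> 0"
  by (simp add: ev_def)

lemma phase_Suc: "phase c a b (Suc n) j t \<tau> x =
   c * \<tau> 0 * th a b j + phase c a b n (stp j (x 0)) (t - \<tau> 0) (\<lambda>k. \<tau> (Suc k)) (\<lambda>k. x (Suc k))"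
proof -
  have s1: "(\<Sum>k<Suc n. \<tau> k) = \<tau> 0 + (\<Sum>k<n. \<tau> (Suc k))" by (rule sum.lessThan_Suc_shift)
  have s2: "(\<Sum>k<Suc n. \<tau> k * th a b (dseq j x k)) = \<tau> 0 * th a b j + (\<Sum>k<n. \<tau> (Suc k) * th a b (dseq (stp j (x 0)) (\<lambda>i. x (Suc i)) k))"
    by (subst sum.lessThan_Suc_shift) (simp only: dseq_shift dseq.simps(1))
  show ?thesis unfolding phase_def s1 s2 dseq_shift by (simp add: algebra_simps)
qed

lemma H_explicit: "H c a b n j t \<tau> x = (if ev n t \<tau> then cis (phase c a b n j t \<tau> x) else 0)"
proof (induction n arbitrary: j t \<tau> x)
  case 0
  then show ?case by (simp add: ev_0 phase_def mult.assoc)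
next
  case (Suc n)
  show ?case by (simp add: Suc.IH ev_Suc phase_Suc cis_mult)
qed

lemma norm_H_le: "norm (H c a b n j t \<tau> x) \<le> 1"
  by (simp add: H_explicit)

lemma ev_unique: assumes "ev n t \<tau>" "ev m t \<tau>" shows "n = m"
proof (rule ccontr)
  assume "n \<noteq> m"
  then consider "n < m" | "m < n" by linarith
  then show False
  proof cases
    case 1
    have "(\<Sum>k<Suc n. \<tau> k) \<le> (\<Sum>k<m. \<tau> k)"
      using 1 assms(2) unfolding ev_def by (intro sum_mono2) auto
    then show False using assms unfolding ev_def by linarith
  next
    case 2
    have "(\<Sum>k<Suc m. \<tau> k) \<le> (\<Sum>k<n. \<tau> k)"
      using 2 assms(1) unfolding ev_def by (intro sum_mono2) auto
    then show False using assms unfolding ev_def by linarith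
  qed
qed

lemma step_integral:
  fixes T :: "nat \<Rightarrow> real" and h :: "real \<Rightarrow> real" and v :: "nat \<Rightarrow> real"
  assumes T0: "T 0 = 0" and Tm: "\<And>k. T k \<le> T (Suc k)"
    and hv: "\<And>k s. k \<le> n \<Longrightarrow> T k \<le> s \<Longrightarrow> s < T (Suc k) \<Longrightarrow> h s = v k"
    and t: "T n \<le> t" "t < T (Suc n)"
  shows "(h has_integral ((\<Sum>k<n. (T (Suc k) - T k) * v k) + (t - T n) * v n)) {0..t}"
proof -
  have mono: "T a \<le> T b" if "a \<le> b" for a b using that by (rule lift_Suc_mono_le[of T, OF Tm])
  have main: "m \<le> n \<Longrightarrow> (h has_integral (\<Sum>k<m. (T (Suc k) - T k) * v k)) {0..T m}" for m
  proof (induction m)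
    case 0
    then show ?case using T0 by (simp add: has_integral_refl(2))
  next
    case (Suc m)
    have piece: "(h has_integral ((T (Suc m) - T m) * v m)) {T m..T (Suc m)}"
    proof (rule has_integral_spike_finite[of "{T (Suc m)}"])
      show "finite {T (Suc m)}" by simp
      show "h x = v m" if "x \<in> {T m..T (Suc m)} - {T (Suc m)}" for x
        using that Suc.prems by (intro hv) auto
      show "((\<lambda>x. v m) has_integral (T (Suc m) - T m) * v m) {T m..T (Suc m)}"
        using has_integral_const_real[of "v m" "T m" "T (Suc m)"] Tm[of m] by simp
    qed
    have "0 \<le> T m" using mono[of 0 m] T0 by simp
    from has_integral_combine[OF this Tm Suc.IH[OF Suc_leD[OF Suc.prems]] piece]
    show ?case by (simp add: add.commute)
  qed
  have last: "(h has_integral ((t - T n) * v n)) {T n..t}"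
  proof -
    have "((\<lambda>x. v n) has_integral (t - T n) * v n) {T n..t}"
      using has_integral_const_real[of "v n" "T n" t] t by simp
    then show ?thesis
      by (rule has_integral_eq[rotated]) (use hv[of n] t in force)
  qed
  have "0 \<le> T n" using mono[of 0 n] T0 by simp
  from has_integral_combine[OF this t(1) main[OF order_refl] last] show ?thesis .
qed

lemma poisson_count_eq:
  assumes pos: "\<And>k. 0 < \<tau> k \<omega>" and s: "jump_time \<tau> k \<omega> \<le> s" "s < jump_time \<tau> (Suc k) \<omega>"
  shows "poisson_count \<tau> s \<omega> = k"
proof -
  have sm: "strict_mono (\<lambda>k. jump_time \<tau> k \<omega>)"
    by (rule strict_monoI_Suc) (simp add: jump_time_def pos)
  have "{n. 1 \<le> n \<and> jump_time \<tau> n \<omega> \<le> s} = {1..k}"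
  proof safe
    fix m assume "1 \<le> m" "jump_time \<tau> m \<omega> \<le> s"
    moreover have "m \<le> k"
    proof (rule ccontr)
      assume "\<not> m \<le> k"
      then have "jump_time \<tau> (Suc k) \<omega> \<le> jump_time \<tau> m \<omega>"
        using strict_mono_less_eq[OF sm, of "Suc k" m] by simp
      then show False using s \<open>jump_time \<tau> m \<omega> \<le> s\<close> by linarith
    qed
    ultimately show "m \<in> {1..k}" by simp
  next
    fix m assume "m \<in> {1..k}"
    then show "1 \<le> m" "jump_time \<tau> m \<omega> \<le> s"
      using s sm by (auto intro: order_trans[OF strict_mono_leD[OF sm]])
  qed
  then show ?thesis by (simp add: poisson_count_def)
qed

lemma pos_eval:
  assumes pos: "\<And>k. 0 < \<tau> k \<omega>" and evn: "ev n t (\<lambda>k. \<tau> k \<omega>)"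
  shows "a * posX c D0 \<tau> \<xi> t \<omega> + b * posY c D0 \<tau> \<xi> t \<omega>
       = phase c a b n (D0 \<omega> mod 4) t (\<lambda>k. \<tau> k \<omega>) (\<lambda>k. \<xi> k \<omega>)"
proof -
  define T where "T k = jump_time \<tau> k \<omega>" for k
  define j where "j = D0 \<omega> mod 4"
  define x where "x = (\<lambda>k. \<xi> k \<omega>)"
  have T0: "T 0 = 0" by (simp add: T_def jump_time_def)
  have TS: "T (Suc k) - T k = \<tau> k \<omega>" for k by (simp add: T_def jump_time_def)
  have Tm: "T k \<le> T (Suc k)" for k using pos[of k] TS[of k] by simp
  have t: "T n \<le> t" "t < T (Suc n)" using evn by (auto simp: ev_def T_def jump_time_def)
  have di: "dir_index D0 \<tau> \<xi> s \<omega> = dseq j x k" if "T k \<le> s" "s < T (Suc k)" for k s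
    using poisson_count_eq[OF pos that[unfolded T_def]]
    by (simp add: dir_index_def dir_seq_dseq j_def x_def)
  have IX: "((\<lambda>s. fst (dir_vec (dir_index D0 \<tau> \<xi> s \<omega>))) has_integral
      ((\<Sum>k<n. (T (Suc k) - T k) * cos (pi * real (dseq j x k) / 2)) + (t - T n) * cos (pi * real (dseq j x n) / 2))) {0..t}"
    by (rule step_integral[OF T0 Tm _ t]) (simp add: di dir_vec_def)
  have IY: "((\<lambda>s. snd (dir_vec (dir_index D0 \<tau> \<xi> s \<omega>))) has_integral
      ((\<Sum>k<n. (T (Suc k) - T k) * sin (pi * real (dseq j x k) / 2)) + (t - T n) * sin (pi * real (dseq j x n) / 2))) {0..t}"
    by (rule step_integral[OF T0 Tm _ t]) (simp add: di dir_vec_def)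
  have Tn: "T n = (\<Sum>k<n. \<tau> k \<omega>)" by (simp add: T_def jump_time_def)
  show ?thesis
    unfolding posX_def posY_def integral_unique[OF IX] integral_unique[OF IY] phase_def TS Tn
    by (simp add: th_def algebra_simps sum_distrib_left sum.distrib j_def x_def)
qed

lemma card_nat_set_eq:
  fixes P :: "nat \<Rightarrow> bool"
  shows "card {n. P n} = m \<longleftrightarrow>
    (\<exists>K. (\<forall>n\<ge>K. \<not> P n) \<and> (\<Sum>n<K. (if P n then 1 else 0::real)) = real m) \<or> ((\<forall>K. \<exists>n\<ge>K. P n) \<and> m = 0)"
proof -
  have sumc: "(\<Sum>n<K. (if P n then 1 else 0::real)) = real (card {n. n < K \<and> P n})" for K
    by (simp add: sum.If_cases Int_def conj_commute)
  show ?thesis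
  proof (cases "finite {n. P n}")
    case True
    then obtain K where K: "\<forall>n\<ge>K. \<not> P n"
      by (metis finite_nat_set_iff_bounded mem_Collect_eq not_less)
    have eqK: "{n. n < K \<and> P n} = {n. P n}" using K by (auto simp: not_le[symmetric])
    have notinf: "\<not> (\<forall>K. \<exists>n\<ge>K. P n)" using K by auto
    have "(\<exists>K. (\<forall>n\<ge>K. \<not> P n) \<and> real (card {n. n < K \<and> P n}) = real m) \<longleftrightarrow> card {n. P n} = m"
    proof
      assume "\<exists>K. (\<forall>n\<ge>K. \<not> P n) \<and> real (card {n. n < K \<and> P n}) = real m"
      then obtain K' where "\<forall>n\<ge>K'. \<not> P n" "card {n. n < K' \<and> P n} = m" by auto
      moreover have "{n. n < K' \<and> P n} = {n. P n}" using calculation(1) by (auto simp: not_le[symmetric])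
      ultimately show "card {n. P n} = m" by simp
    next
      assume "card {n. P n} = m" then show "\<exists>K. (\<forall>n\<ge>K. \<not> P n) \<and> real (card {n. n < K \<and> P n}) = real m"
        using K eqK by auto
    qed
    then show ?thesis using notinf unfolding sumc by blast
  next
    case False
    have inf: "\<forall>K. \<exists>n\<ge>K. P n"
    proof
      fix K show "\<exists>n\<ge>K. P n"
      proof (rule ccontr)
        assume "\<not> (\<exists>n\<ge>K. P n)"
        then have "{n. P n} \<subseteq> {..<K}" by (auto simp: not_le[symmetric])
        then show False using False finite_subset by blast
      qed
    qed
    have "\<not> (\<exists>K. (\<forall>n\<ge>K. \<not> P n))" using inf by auto
    then show ?thesis using False inf by auto
  qed
qed

lemma count_meas:
  fixes S :: "nat \<Rightarrow> 'a \<Rightarrow> real" and u :: "'a \<Rightarrow> real"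
  assumes S[measurable]: "\<And>n. (\<lambda>x. S n x) \<in> borel_measurable N" and u[measurable]: "u \<in> borel_measurable N"
  shows "(\<lambda>x. card {n::nat. 1 \<le> n \<and> S n x \<le> u x}) \<in> measurable N (count_space UNIV)"
proof (subst measurable_count_space_eq2_countable, safe)
  fix m :: nat
  have "(\<lambda>x. card {n::nat. 1 \<le> n \<and> S n x \<le> u x}) -` {m} \<inter> space N =
    {x \<in> space N. (\<exists>K. (\<forall>n\<ge>K. \<not> (1 \<le> n \<and> S n x \<le> u x)) \<and> (\<Sum>n<K. (if 1 \<le> n \<and> S n x \<le> u x then 1 else 0::real)) = real m)
        \<or> ((\<forall>K. \<exists>n\<ge>K. 1 \<le> n \<and> S n x \<le> u x) \<and> m = 0)}"
    by (subst card_nat_set_eq[symmetric]) auto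
  also have "\<dots> \<in> sets N"
  proof -
    have p1[measurable]: "Measurable.pred N (\<lambda>x. S n x \<le> u x)" for n
      by measurable
    have p2[measurable]: "(\<lambda>x. (\<Sum>n<K. (if 1 \<le> n \<and> S n x \<le> u x then 1 else 0::real))) \<in> borel_measurable N" for K
      by measurable
    show ?thesis by measurable
  qed
  finally show "(\<lambda>x. card {n::nat. 1 \<le> n \<and> S n x \<le> u x}) -` {m} \<inter> space N \<in> sets N" .
qed simp

lemma dir_seq_meas[measurable]:
  assumes [measurable]: "D0 \<in> measurable M (count_space UNIV)" "\<And>k. \<xi> k \<in> measurable M (count_space UNIV)"
  shows "(\<lambda>\<omega>. dir_seq D0 \<xi> n \<omega>) \<in> measurable M (count_space UNIV)"
  by (induction n) (simp_all add: Let_def)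

lemma pos_meas_gen:
  fixes F :: "real \<Rightarrow> real"
  assumes D0[measurable]: "D0 \<in> measurable M (count_space UNIV)"
    and tau[measurable]: "\<And>k. \<tau> k \<in> borel_measurable M"
    and xi[measurable]: "\<And>k. \<xi> k \<in> measurable M (count_space UNIV)"
    and Fb: "\<And>x. \<bar>F x\<bar> \<le> 1"
  shows "(\<lambda>\<omega>. integral {0..t} (\<lambda>s. F (real (dir_index D0 \<tau> \<xi> s \<omega>)))) \<in> borel_measurable M"
proof -
  have Fm[measurable]: "F \<in> borel_measurable (count_space UNIV)" by simp
  define g where "g \<omega> s = F (real (dir_seq D0 \<xi> (poisson_count \<tau> s \<omega>) \<omega>))" for \<omega> s
  have pc[measurable]: "(\<lambda>z. poisson_count \<tau> (snd z) (fst z)) \<in> measurable (M \<Otimes>\<^sub>M lborel) (count_space UNIV)"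
    unfolding poisson_count_def
    by (rule count_meas) (simp_all add: jump_time_def)
  have gm: "(\<lambda>z. g (fst z) (snd z)) \<in> borel_measurable (M \<Otimes>\<^sub>M lborel)"
    unfolding g_def
  proof (rule measurable_compose_countable[where f="\<lambda>i z. F (real (dir_seq D0 \<xi> i (fst z)))"])
    fix i show "(\<lambda>z. F (real (dir_seq D0 \<xi> i (fst z)))) \<in> borel_measurable (M \<Otimes>\<^sub>M lborel)"
      by measurable
  qed (rule pc)
  have gm2: "g \<omega> \<in> borel_measurable lborel" if "\<omega> \<in> space M" for \<omega>
    using measurable_Pair2[OF gm that] by simp
  have si: "set_integrable lborel {0..t} (g \<omega>)" if "\<omega> \<in> space M" for \<omega>
  proof -
    have i1: "integrable lborel (indicator {0..t} :: real \<Rightarrow> real)"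
      by (simp add: integrable_indicator_iff emeasure_lborel_Icc_eq)
    have m1: "(\<lambda>x. indicator {0..t} x *\<^sub>R g \<omega> x) \<in> borel_measurable lborel"
      using gm2[OF that] by measurable
    have b1: "AE x in lborel. norm (indicator {0..t} x *\<^sub>R g \<omega> x) \<le> norm (indicator {0..t} x :: real)"
      by (auto simp: g_def indicator_def Fb)
    show ?thesis unfolding set_integrable_def by (rule Bochner_Integration.integrable_bound[OF i1 m1 b1])
  qed
  have eq: "integral {0..t} (\<lambda>s. F (real (dir_index D0 \<tau> \<xi> s \<omega>))) = (\<integral>s. indicator {0..t} s *\<^sub>R g \<omega> s \<partial>lborel)"
    if "\<omega> \<in> space M" for \<omega>
    using set_borel_integral_eq_integral(2)[OF si[OF that]]
    by (simp add: set_lebesgue_integral_def g_def[abs_def] dir_index_def)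
  have "(\<lambda>\<omega>. \<integral>s. indicator {0..t} s *\<^sub>R g \<omega> s \<partial>lborel) \<in> borel_measurable M"
  proof (rule lborel.borel_measurable_lebesgue_integral)
    show "(\<lambda>(\<omega>, s). indicator {0..t} s *\<^sub>R g \<omega> s) \<in> borel_measurable (M \<Otimes>\<^sub>M lborel)"
      using gm by (simp add: case_prod_beta') measurable
  qed
  then show ?thesis by (rule measurable_cong[THEN iffD1, rotated]) (simp add: eq)
qed

lemma W_meas:
  assumes D0[measurable]: "D0 \<in> measurable M (count_space UNIV)"
    and tau[measurable]: "\<And>k. \<tau> k \<in> borel_measurable M"
    and xi[measurable]: "\<And>k. \<xi> k \<in> measurable M (count_space UNIV)"
  shows "(\<lambda>\<omega>. cis (a * posX c D0 \<tau> \<xi> t \<omega> + b * posY c D0 \<tau> \<xi> t \<omega>)) \<in> borel_measurable M"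
proof -
  have X[measurable]: "(\<lambda>\<omega>. posX c D0 \<tau> \<xi> t \<omega>) \<in> borel_measurable M"
    unfolding posX_def dir_vec_def fst_conv
    using pos_meas_gen[OF D0 tau xi, of "\<lambda>x. cos (pi * x / 2)" t] by simp
  have Y[measurable]: "(\<lambda>\<omega>. posY c D0 \<tau> \<xi> t \<omega>) \<in> borel_measurable M"
    unfolding posY_def dir_vec_def snd_conv
    using pos_meas_gen[OF D0 tau xi, of "\<lambda>x. sin (pi * x / 2)" t] by simp
  show ?thesis unfolding cis_conv_exp by measurable
qed

lemma (in prob_space) indep_integral:
  fixes g :: "'b \<times> 'b \<Rightarrow> complex"
  assumes ind: "indep_var S X T Y" and gm[measurable]: "g \<in> borel_measurable (S \<Otimes>\<^sub>M T)"
    and gb: "\<And>z. norm (g z) \<le> B"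
  shows "(\<integral>\<omega>. g (X \<omega>, Y \<omega>) \<partial>M) = (\<integral>x. (\<integral>\<omega>. g (x, Y \<omega>) \<partial>M) \<partial>(distr M S X))"
proof -
  have rvX[measurable]: "X \<in> measurable M S" using indep_var_rv1[OF ind] .
  have rvY[measurable]: "Y \<in> measurable M T" using indep_var_rv2[OF ind] .
  have deq: "distr M S X \<Otimes>\<^sub>M distr M T Y = distr M (S \<Otimes>\<^sub>M T) (\<lambda>x. (X x, Y x))"
    using ind by (simp add: indep_var_distribution_eq)
  interpret PX: prob_space "distr M S X" by (rule prob_space_distr) simp
  interpret PY: prob_space "distr M T Y" by (rule prob_space_distr) simp
  interpret PP: pair_prob_space "distr M S X" "distr M T Y" ..
  have gi: "integrable (distr M S X \<Otimes>\<^sub>M distr M T Y) g"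
    by (rule PP.P.integrable_const_bound[where B=B]) (auto simp: gb)
  have "(\<integral>\<omega>. g (X \<omega>, Y \<omega>) \<partial>M) = integral\<^sup>L (distr M (S \<Otimes>\<^sub>M T) (\<lambda>x. (X x, Y x))) g"
    by (subst integral_distr) auto
  also have "\<dots> = integral\<^sup>L (distr M S X \<Otimes>\<^sub>M distr M T Y) g" by (simp add: deq)
  also have "\<dots> = (\<integral>x. (\<integral>y. g (x, y) \<partial>distr M T Y) \<partial>distr M S X)"
    by (rule PP.integral_fst'[OF gi, symmetric])
  also have "\<dots> = (\<integral>x. (\<integral>\<omega>. g (x, Y \<omega>) \<partial>M) \<partial>distr M S X)"
  proof (rule Bochner_Integration.integral_cong[OF refl])
    fix x assume "x \<in> space (distr M S X)"
    then have x: "x \<in> space S" by simp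
    have "(\<lambda>y. g (x, y)) \<in> borel_measurable T" using x by measurable
    then show "(\<integral>y. g (x, y) \<partial>distr M T Y) = (\<integral>\<omega>. g (x, Y \<omega>) \<partial>M)"
      by (subst integral_distr) auto
  qed
  finally show ?thesis .
qed

lemma (in prob_space) indep_integral_prod:
  fixes f :: "'b \<Rightarrow> complex" and h :: "'b \<Rightarrow> complex"
  assumes ind: "indep_var S X T Y" and fm[measurable]: "f \<in> borel_measurable S" and hm[measurable]: "h \<in> borel_measurable T"
    and fb: "\<And>z. norm (f z) \<le> Bf" and hb: "\<And>z. norm (h z) \<le> Bh"
  shows "(\<integral>\<omega>. f (X \<omega>) * h (Y \<omega>) \<partial>M) = (\<integral>\<omega>. f (X \<omega>) \<partial>M) * (\<integral>\<omega>. h (Y \<omega>) \<partial>M)"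
proof -
  have rvX[measurable]: "X \<in> measurable M S" using indep_var_rv1[OF ind] .
  have "(\<integral>\<omega>. f (X \<omega>) * h (Y \<omega>) \<partial>M) = (\<integral>\<omega>. (\<lambda>z. f (fst z) * h (snd z)) (X \<omega>, Y \<omega>) \<partial>M)" by simp
  also have "\<dots> = (\<integral>x. (\<integral>\<omega>. f x * h (Y \<omega>) \<partial>M) \<partial>(distr M S X))"
  proof -
    have m: "(\<lambda>z. f (fst z) * h (snd z)) \<in> borel_measurable (S \<Otimes>\<^sub>M T)" by measurable
    have b: "norm (f (fst z) * h (snd z)) \<le> Bf * Bh" for z
      unfolding norm_mult by (rule mult_mono) (use fb hb norm_ge_zero order_trans in blast)+
    show ?thesis using indep_integral[OF ind m b] by simp
  qed
  also have "\<dots> = (\<integral>x. f x * (\<integral>\<omega>. h (Y \<omega>) \<partial>M) \<partial>(distr M S X))" by simp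
  also have "\<dots> = (\<integral>x. f x \<partial>(distr M S X)) * (\<integral>\<omega>. h (Y \<omega>) \<partial>M)" by simp
  also have "(\<integral>x. f x \<partial>(distr M S X)) = (\<integral>\<omega>. f (X \<omega>) \<partial>M)" by (subst integral_distr) auto
  finally show ?thesis .
qed

lemma H_meas:
  fixes T :: "'b \<Rightarrow> real" and tt :: "nat \<Rightarrow> 'b \<Rightarrow> real" and xx :: "nat \<Rightarrow> 'b \<Rightarrow> bool"
  assumes "T \<in> borel_measurable N" "\<And>k. tt k \<in> borel_measurable N" "\<And>k. xx k \<in> measurable N (count_space UNIV)"
  shows "(\<lambda>z. H c a b n j (T z) (\<lambda>k. tt k z) (\<lambda>k. xx k z)) \<in> borel_measurable N"
  using assms
proof (induction n arbitrary: j T tt xx)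
  case 0
  note [measurable] = "0.prems"
  show ?case unfolding H.simps cis_conv_exp by measurable
next
  case (Suc n)
  note [measurable] = Suc.prems
  have [measurable]: "(\<lambda>z. tt (Suc k) z) \<in> borel_measurable N" for k using Suc.prems by simp
  have [measurable]: "(\<lambda>z. xx (Suc k) z) \<in> measurable N (count_space UNIV)" for k using Suc.prems by simp
  have i1[measurable]: "(\<lambda>z. H c a b n (stp j bb) (T z - tt 0 z) (\<lambda>k. tt (Suc k) z) (\<lambda>k. xx (Suc k) z)) \<in> borel_measurable N" for bb
    by (rule Suc.IH) simp_all
  have eq: "H c a b (Suc n) j (T z) (\<lambda>k. tt k z) (\<lambda>k. xx k z) =
    (if 0 \<le> tt 0 z \<and> tt 0 z \<le> T z then cis (c * tt 0 z * th a b j) *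
      (if xx 0 z then H c a b n (stp j True) (T z - tt 0 z) (\<lambda>k. tt (Suc k) z) (\<lambda>k. xx (Suc k) z)
       else H c a b n (stp j False) (T z - tt 0 z) (\<lambda>k. tt (Suc k) z) (\<lambda>k. xx (Suc k) z)) else 0)" for z
    by (cases "xx 0 z") simp_all
  show ?case unfolding eq cis_conv_exp by measurable
qed

locale orw = prob_space M for M :: "'a measure" +
  fixes lam p c a b :: real and D0 :: "'a \<Rightarrow> nat" and \<tau> :: "nat \<Rightarrow> 'a \<Rightarrow> real" and \<xi> :: "nat \<Rightarrow> 'a \<Rightarrow> bool"
  assumes lam: "lam > 0" and p0: "0 < p" and p1: "p < 1"
    and D0m[measurable]: "D0 \<in> measurable M (count_space UNIV)"
    and taum[measurable]: "\<And>k. \<tau> k \<in> borel_measurable M"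
    and xim[measurable]: "\<And>k. \<xi> k \<in> measurable M (count_space UNIV)"
    and ind: "indep_vars (\<lambda>_. borel) (src_rv D0 \<tau> \<xi>) UNIV"
    and D0d: "\<forall>j<4. measure M {\<omega> \<in> space M. D0 \<omega> = j} = 1/4"
    and taud: "\<And>k. distributed M lborel (\<tau> k) (exponential_density lam)"
    and xid: "\<And>k. measure M {\<omega> \<in> space M. \<xi> k \<omega>} = p"
begin

abbreviation "src \<equiv> src_rv D0 \<tau> \<xi>"

definition L :: "nat \<Rightarrow> src set" where "L m = Wait ` {m..} \<union> Turn ` {m..}"

definition F :: "nat \<Rightarrow> nat \<Rightarrow> nat \<Rightarrow> real \<Rightarrow> complex" where
  "F n m j t = (\<integral>\<omega>. H c a b n j t (\<lambda>k. \<tau> (m + k) \<omega>) (\<lambda>k. \<xi> (m + k) \<omega>) \<partial>M)"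

lemma F_base: "F 0 m j t = (if 0 \<le> t then exp (- lam * t) * cis (c * t * th a b j) else 0)"
proof (cases "0 \<le> t")
  case True
  have "F 0 m j t = (\<integral>\<omega>. of_real (indicator {\<omega> \<in> space M. t < \<tau> m \<omega>} \<omega>) * cis (c * t * th a b j) \<partial>M)"
    unfolding F_def using True by (intro Bochner_Integration.integral_cong) (auto simp: indicator_def)
  also have "\<dots> = of_real (prob {\<omega> \<in> space M. t < \<tau> m \<omega>}) * cis (c * t * th a b j)"
    by (simp add: measure_def)
  also have "prob {\<omega> \<in> space M. t < \<tau> m \<omega>} = exp (- t * lam)"
    using exponential_distributedD_gt[OF taud True lam] .
  finally show ?thesis using True by (simp add: mult.commute)
next
  case False
  then show ?thesis unfolding F_def by simp
qed

lemma src_Wait[simp]: "src (Wait k) \<omega> = \<tau> k \<omega>" and src_Turn[simp]: "src (Turn k) \<omega> = of_bool (\<xi> k \<omega>)"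
  and src_Dir0[simp]: "src Dir0 \<omega> = real (D0 \<omega>)"
  by (simp_all add: src_rv_def)

lemma F_meas: "(\<lambda>s. F n m j (t - s)) \<in> borel_measurable borel"
proof -
  have "(\<lambda>z. H c a b n j (t - fst z) (\<lambda>k. \<tau> (m + k) (snd z)) (\<lambda>k. \<xi> (m + k) (snd z))) \<in> borel_measurable (borel \<Otimes>\<^sub>M M)"
    by (rule H_meas) simp_all
  then have "(\<lambda>s. \<integral>\<omega>. H c a b n j (t - s) (\<lambda>k. \<tau> (m + k) \<omega>) (\<lambda>k. \<xi> (m + k) \<omega>) \<partial>M) \<in> borel_measurable borel"
    by (intro borel_measurable_lebesgue_integral) (simp add: case_prod_beta')
  then show ?thesis by (simp add: F_def)
qed

lemma H_int: "integrable M (\<lambda>\<omega>. H c a b n j (T \<omega>) (\<lambda>k. tt k \<omega>) (\<lambda>k. xx k \<omega>))"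
  if "T \<in> borel_measurable M" "\<And>k. tt k \<in> borel_measurable M" "\<And>k. xx k \<in> measurable M (count_space UNIV)"
  by (rule integrable_const_bound[where B=1]) (auto simp: norm_H_le intro!: H_meas that)

lemma E_xi: "(\<integral>\<omega>. (if \<xi> m \<omega> then 1 else 0 :: complex) \<partial>M) = p"
  and E_nxi: "(\<integral>\<omega>. (if \<xi> m \<omega> then 0 else 1 :: complex) \<partial>M) = 1 - p"
proof -
  have ximm[measurable]: "Measurable.pred M (\<xi> m)" using xim[of m] by simp
  have "(\<integral>\<omega>. (if \<xi> m \<omega> then 1 else 0 :: complex) \<partial>M) = (\<integral>\<omega>. of_real (indicator {\<omega> \<in> space M. \<xi> m \<omega>} \<omega>) \<partial>M)"
    by (intro Bochner_Integration.integral_cong) (auto simp: indicator_def)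
  also have "\<dots> = p" using xid[of m] by (simp add: measure_def)
  finally show 1: "(\<integral>\<omega>. (if \<xi> m \<omega> then 1 else 0 :: complex) \<partial>M) = p" .
  have "(\<integral>\<omega>. (if \<xi> m \<omega> then 0 else 1 :: complex) \<partial>M) = (\<integral>\<omega>. 1 - (if \<xi> m \<omega> then 1 else 0 :: complex) \<partial>M)"
    by (intro Bochner_Integration.integral_cong) auto
  also have "\<dots> = (\<integral>\<omega>. 1 \<partial>M) - (\<integral>\<omega>. (if \<xi> m \<omega> then 1 else 0 :: complex) \<partial>M)"
    by (rule Bochner_Integration.integral_diff) (auto intro!: integrable_const_bound[where B=1])
  finally show "(\<integral>\<omega>. (if \<xi> m \<omega> then 0 else 1 :: complex) \<partial>M) = 1 - p" using 1 by (simp add: prob_space)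
qed

lemma meas_comp_PiM: "i \<in> B \<Longrightarrow> (\<lambda>y. y i) \<in> borel_measurable (PiM B (\<lambda>_. borel :: real measure))"
  by (rule measurable_component_singleton)

lemma F_Suc:
  "F (Suc n) m j t =
     p * (\<integral>s. of_real (exponential_density lam s) * (if 0 \<le> s \<and> s \<le> t then cis (c * s * th a b j) * F n (Suc m) (stp j True) (t - s) else 0) \<partial>lborel)
   + (1 - p) * (\<integral>s. of_real (exponential_density lam s) * (if 0 \<le> s \<and> s \<le> t then cis (c * s * th a b j) * F n (Suc m) (stp j False) (t - s) else 0) \<partial>lborel)"
proof -
  define Q where "Q bb \<omega> = (if 0 \<le> \<tau> m \<omega> \<and> \<tau> m \<omega> \<le> t then cis (c * \<tau> m \<omega> * th a b j) *
     H c a b n (stp j bb) (t - \<tau> m \<omega>) (\<lambda>k. \<tau> (Suc m + k) \<omega>) (\<lambda>k. \<xi> (Suc m + k) \<omega>) else 0)" for bb \<omega>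
  define I where "I bb = (\<integral>s. of_real (exponential_density lam s) * (if 0 \<le> s \<and> s \<le> t then cis (c * s * th a b j) * F n (Suc m) (stp j bb) (t - s) else 0) \<partial>lborel)" for bb
  have Qm[measurable]: "Q bb \<in> borel_measurable M" for bb
  proof -
    have "(\<lambda>\<omega>. H c a b n (stp j bb) (t - \<tau> m \<omega>) (\<lambda>k. \<tau> (Suc m + k) \<omega>) (\<lambda>k. \<xi> (Suc m + k) \<omega>)) \<in> borel_measurable M"
      by (rule H_meas) simp_all
    then show ?thesis unfolding Q_def[abs_def] cis_conv_exp by measurable
  qed
  have Qb: "norm (Q bb \<omega>) \<le> 1" for bb \<omega> by (simp add: Q_def norm_H_le norm_mult)
  have Qi: "integrable M (Q bb)" for bb by (rule integrable_const_bound[where B=1]) (auto simp: Qb)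
  have step1: "F (Suc n) m j t = (\<integral>\<omega>. (if \<xi> m \<omega> then 1 else 0) * Q True \<omega> + (if \<xi> m \<omega> then 0 else 1) * Q False \<omega> \<partial>M)"
    unfolding F_def by (intro Bochner_Integration.integral_cong) (auto simp: Q_def)
  have ximm[measurable]: "Measurable.pred M (\<xi> m)" using xim[of m] by simp
  have step2: "(\<integral>\<omega>. (if \<xi> m \<omega> then 1 else 0) * Q bb \<omega> + (if \<xi> m \<omega> then 0 else 1) * Q bb' \<omega> \<partial>M)
      = (\<integral>\<omega>. (if \<xi> m \<omega> then 1 else 0) * Q bb \<omega> \<partial>M) + (\<integral>\<omega>. (if \<xi> m \<omega> then 0 else 1) * Q bb' \<omega> \<partial>M)" for bb bb'
  proof (rule Bochner_Integration.integral_add)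
    show "integrable M (\<lambda>\<omega>. (if \<xi> m \<omega> then 1 else 0) * Q bb \<omega>)"
      by (rule integrable_const_bound[where B=1]) (auto simp: Qb)
    show "integrable M (\<lambda>\<omega>. (if \<xi> m \<omega> then 0 else 1) * Q bb' \<omega>)"
      by (rule integrable_const_bound[where B=1]) (auto simp: Qb)
  qed
  define B where "B = insert (Wait m) (L (Suc m))"
  define hq where "hq bb y = (if 0 \<le> y (Wait m) \<and> y (Wait m) \<le> t then cis (c * y (Wait m) * th a b j) *
     H c a b n (stp j bb) (t - y (Wait m)) (\<lambda>k. y (Wait (Suc m + k))) (\<lambda>k. y (Turn (Suc m + k)) = 1) else 0)" for bb and y :: "src \<Rightarrow> real"
  have inBf: "Wait m \<in> B" by (simp add: B_def)
  have inBh: "Wait (Suc m + k) \<in> B" for k unfolding B_def L_def by (intro insertI2 UnI1 imageI) simp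
  have inB3: "Turn (Suc m + k) \<in> B" for k unfolding B_def L_def by (intro insertI2 UnI2 imageI) simp
  note inB = inBf inBh inB3
  have c1[measurable]: "(\<lambda>y. y (Wait m)) \<in> borel_measurable (PiM B (\<lambda>_. borel :: real measure))"
    by (rule measurable_component_singleton[OF inBf])
  have c2[measurable]: "(\<lambda>y. y (Wait (Suc m + k))) \<in> borel_measurable (PiM B (\<lambda>_. borel :: real measure))" for k
    by (rule measurable_component_singleton[OF inBh])
  have c3[measurable]: "(\<lambda>y. y (Turn (Suc m + k))) \<in> borel_measurable (PiM B (\<lambda>_. borel :: real measure))" for k
    by (rule measurable_component_singleton[OF inB3])
  have hqm[measurable]: "hq bb \<in> borel_measurable (PiM B (\<lambda>_. borel))" for bb
  proof -
    have "(\<lambda>y. H c a b n (stp j bb) (t - y (Wait m)) (\<lambda>k. y (Wait (Suc m + k))) (\<lambda>k. y (Turn (Suc m + k)) = 1))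
       \<in> borel_measurable (PiM B (\<lambda>_. borel))"
      by (rule H_meas) measurable
    then show ?thesis unfolding hq_def[abs_def] cis_conv_exp by measurable
  qed
  have hqb: "norm (hq bb y) \<le> 1" for bb y by (simp add: hq_def norm_H_le norm_mult)
  have indXY: "indep_var (PiM {Turn m} (\<lambda>_. borel)) (\<lambda>\<omega>. restrict (\<lambda>i. src i \<omega>) {Turn m})
                         (PiM B (\<lambda>_. borel)) (\<lambda>\<omega>. restrict (\<lambda>i. src i \<omega>) B)"
    by (rule indep_var_restrict[OF ind]) (auto simp: B_def L_def)
  have hqQ: "hq bb (restrict (\<lambda>i. src i \<omega>) B) = Q bb \<omega>" for bb \<omega>
    using inB by (simp add: hq_def Q_def)
  have step3: "(\<integral>\<omega>. (if \<xi> m \<omega> then 1 else 0) * Q bb \<omega> \<partial>M) = p * (\<integral>\<omega>. Q bb \<omega> \<partial>M)" for bb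
  proof -
    have "(\<integral>\<omega>. (\<lambda>x. if x (Turn m) = 1 then 1 else 0 :: complex) (restrict (\<lambda>i. src i \<omega>) {Turn m}) * hq bb (restrict (\<lambda>i. src i \<omega>) B) \<partial>M)
      = (\<integral>\<omega>. (\<lambda>x. if x (Turn m) = 1 then 1 else 0 :: complex) (restrict (\<lambda>i. src i \<omega>) {Turn m}) \<partial>M) * (\<integral>\<omega>. hq bb (restrict (\<lambda>i. src i \<omega>) B) \<partial>M)"
      by (rule indep_integral_prod[OF indXY, where Bf=1 and Bh=1]) (auto simp: hqb)
    then show ?thesis by (simp add: hqQ E_xi)
  qed
  have step3': "(\<integral>\<omega>. (if \<xi> m \<omega> then 0 else 1) * Q bb \<omega> \<partial>M) = (1 - p) * (\<integral>\<omega>. Q bb \<omega> \<partial>M)" for bb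
  proof -
    have "(\<integral>\<omega>. (\<lambda>x. if x (Turn m) = 1 then 0 else 1 :: complex) (restrict (\<lambda>i. src i \<omega>) {Turn m}) * hq bb (restrict (\<lambda>i. src i \<omega>) B) \<partial>M)
      = (\<integral>\<omega>. (\<lambda>x. if x (Turn m) = 1 then 0 else 1 :: complex) (restrict (\<lambda>i. src i \<omega>) {Turn m}) \<partial>M) * (\<integral>\<omega>. hq bb (restrict (\<lambda>i. src i \<omega>) B) \<partial>M)"
      by (rule indep_integral_prod[OF indXY, where Bf=1 and Bh=1]) (auto simp: hqb)
    then show ?thesis by (simp add: hqQ E_nxi)
  qed
  have step4: "(\<integral>\<omega>. Q bb \<omega> \<partial>M) = I bb" for bb
  proof -
    define g where "g z = (if 0 \<le> fst z (Wait m) \<and> fst z (Wait m) \<le> t then cis (c * fst z (Wait m) * th a b j) *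
     H c a b n (stp j bb) (t - fst z (Wait m)) (\<lambda>k. snd z (Wait (Suc m + k))) (\<lambda>k. snd z (Turn (Suc m + k)) = 1) else 0)"
      for z :: "(src \<Rightarrow> real) \<times> (src \<Rightarrow> real)"
    define \<phi> where "\<phi> s = (if 0 \<le> s \<and> s \<le> t then cis (c * s * th a b j) * F n (Suc m) (stp j bb) (t - s) else 0)" for s
    let ?S = "PiM {Wait m} (\<lambda>_. borel :: real measure)"
    let ?T = "PiM (L (Suc m)) (\<lambda>_. borel :: real measure)"
    have w1: "Wait (Suc m + k) \<in> L (Suc m)" for k unfolding L_def by (intro UnI1 imageI) simp
    have w2: "Turn (Suc m + k) \<in> L (Suc m)" for k unfolding L_def by (intro UnI2 imageI) simp
    have w1': "Wait (Suc (m + k)) \<in> L (Suc m)" for k using w1[of k] by simp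
    have w2': "Turn (Suc (m + k)) \<in> L (Suc m)" for k using w2[of k] by simp
    have d1[measurable]: "(\<lambda>z. fst z (Wait m)) \<in> borel_measurable (?S \<Otimes>\<^sub>M ?T)"
      by (rule measurable_compose[OF measurable_fst measurable_component_singleton]) simp
    have d2[measurable]: "(\<lambda>z. snd z (Wait (Suc m + k))) \<in> borel_measurable (?S \<Otimes>\<^sub>M ?T)" for k
      by (rule measurable_compose[OF measurable_snd measurable_component_singleton]) (rule w1)
    have d3[measurable]: "(\<lambda>z. snd z (Turn (Suc m + k))) \<in> borel_measurable (?S \<Otimes>\<^sub>M ?T)" for k
      by (rule measurable_compose[OF measurable_snd measurable_component_singleton]) (rule w2)
    have gm: "g \<in> borel_measurable (?S \<Otimes>\<^sub>M ?T)"
    proof -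
      have "(\<lambda>z. H c a b n (stp j bb) (t - fst z (Wait m)) (\<lambda>k. snd z (Wait (Suc m + k))) (\<lambda>k. snd z (Turn (Suc m + k)) = 1))
         \<in> borel_measurable (?S \<Otimes>\<^sub>M ?T)"
        by (rule H_meas) measurable
      then show ?thesis unfolding g_def[abs_def] cis_conv_exp by measurable
    qed
    have gb: "norm (g z) \<le> 1" for z by (simp add: g_def norm_H_le norm_mult)
    have ind2: "indep_var ?S (\<lambda>\<omega>. restrict (\<lambda>i. src i \<omega>) {Wait m}) ?T (\<lambda>\<omega>. restrict (\<lambda>i. src i \<omega>) (L (Suc m)))"
      by (rule indep_var_restrict[OF ind]) (auto simp: L_def)
    have "(\<integral>\<omega>. Q bb \<omega> \<partial>M) = (\<integral>\<omega>. g (restrict (\<lambda>i. src i \<omega>) {Wait m}, restrict (\<lambda>i. src i \<omega>) (L (Suc m))) \<partial>M)"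
      by (intro Bochner_Integration.integral_cong) (auto simp: g_def Q_def w1' w2')
    also have "\<dots> = (\<integral>x. (\<integral>\<omega>. g (x, restrict (\<lambda>i. src i \<omega>) (L (Suc m))) \<partial>M) \<partial>distr M ?S (\<lambda>\<omega>. restrict (\<lambda>i. src i \<omega>) {Wait m}))"
      by (rule indep_integral[OF ind2 gm gb])
    also have "\<dots> = (\<integral>x. \<phi> (x (Wait m)) \<partial>distr M ?S (\<lambda>\<omega>. restrict (\<lambda>i. src i \<omega>) {Wait m}))"
    proof (intro Bochner_Integration.integral_cong refl)
      fix x :: "src \<Rightarrow> real"
      show "(\<integral>\<omega>. g (x, restrict (\<lambda>i. src i \<omega>) (L (Suc m))) \<partial>M) = \<phi> (x (Wait m))"
      proof (cases "0 \<le> x (Wait m) \<and> x (Wait m) \<le> t")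
        case True
        have "(\<integral>\<omega>. g (x, restrict (\<lambda>i. src i \<omega>) (L (Suc m))) \<partial>M) =
          (\<integral>\<omega>. cis (c * x (Wait m) * th a b j) * H c a b n (stp j bb) (t - x (Wait m)) (\<lambda>k. \<tau> (Suc m + k) \<omega>) (\<lambda>k. \<xi> (Suc m + k) \<omega>) \<partial>M)"
          using True by (intro Bochner_Integration.integral_cong) (auto simp: g_def w1' w2')
        also have "\<dots> = cis (c * x (Wait m) * th a b j) * F n (Suc m) (stp j bb) (t - x (Wait m))"
          by (simp add: F_def)
        finally show ?thesis using True by (simp add: \<phi>_def)
      next
        case False
        have "(\<integral>\<omega>. g (x, restrict (\<lambda>i. src i \<omega>) (L (Suc m))) \<partial>M) = (\<integral>\<omega>. 0 \<partial>M)"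
          using False by (intro Bochner_Integration.integral_cong refl) (auto simp: g_def)
        then show ?thesis using False by (auto simp: \<phi>_def)
      qed
    qed
    also have "\<phi> \<in> borel_measurable borel"
      using F_meas[of n "Suc m" "stp j bb" t] unfolding \<phi>_def[abs_def] cis_conv_exp by measurable
    then have "(\<integral>x. \<phi> (x (Wait m)) \<partial>distr M ?S (\<lambda>\<omega>. restrict (\<lambda>i. src i \<omega>) {Wait m})) = (\<integral>\<omega>. \<phi> (\<tau> m \<omega>) \<partial>M)"
      by (subst integral_distr) (auto intro: measurable_restrict)
    also have "\<dots> = (\<integral>s. \<phi> s \<partial>distr M lborel (\<tau> m))"
      using \<open>\<phi> \<in> borel_measurable borel\<close> by (subst integral_distr) auto
    also have "distr M lborel (\<tau> m) = density lborel (\<lambda>x. ennreal (exponential_density lam x))"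
      using taud[of m] by (simp add: distributed_def)
    also have "(\<integral>s. \<phi> s \<partial>density lborel (\<lambda>x. ennreal (exponential_density lam x))) = (\<integral>s. exponential_density lam s *\<^sub>R \<phi> s \<partial>lborel)"
      using \<open>\<phi> \<in> borel_measurable borel\<close> lam
      by (subst integral_density) (auto simp: exponential_density_nonneg)
    also have "\<dots> = I bb" unfolding I_def \<phi>_def by (simp add: scaleR_conv_of_real)
    finally show ?thesis .
  qed
  show ?thesis
    unfolding step1 step2 step3 step3' step4 I_def ..
qed

end

definition Chz :: "complex \<Rightarrow> complex \<Rightarrow> complex" where
  "Chz R z = (if R = 0 then 1 else (exp (R * z) + exp (- (R * z))) / 2)"
definition Shz :: "complex \<Rightarrow> complex \<Rightarrow> complex" where
  "Shz R z = (if R = 0 then z else (exp (R * z) - exp (- (R * z))) / (2 * R))"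

lemma Chz_deriv: "(Chz R has_field_derivative (R^2 * Shz R z)) (at z)"
proof (cases "R = 0")
  case True
  then show ?thesis unfolding Chz_def Shz_def by (auto intro!: derivative_eq_intros)
next
  case False
  have "((\<lambda>z. (exp (R * z) + exp (- (R * z))) / 2) has_field_derivative (R^2 * ((exp (R * z) - exp (- (R * z))) / (2 * R)))) (at z)"
    by (rule derivative_eq_intros refl | simp)+ (use False in \<open>simp add: field_simps power2_eq_square\<close>)
  then show ?thesis using False unfolding Chz_def Shz_def by simp
qed

lemma Shz_deriv: "(Shz R has_field_derivative (Chz R z)) (at z)"
proof (cases "R = 0")
  case True
  then show ?thesis unfolding Chz_def Shz_def by (auto intro!: derivative_eq_intros)
next
  case False
  have "((\<lambda>z. (exp (R * z) - exp (- (R * z))) / (2 * R)) has_field_derivative ((exp (R * z) + exp (- (R * z))) / 2)) (at z)"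
    by (rule derivative_eq_intros refl | simp)+ (use False in \<open>auto simp: divide_simps algebra_simps\<close>)
  then show ?thesis using False unfolding Chz_def Shz_def by simp
qed

lemma Chz_0[simp]: "Chz R 0 = 1" and Shz_0[simp]: "Shz R 0 = 0"
  by (simp_all add: Chz_def Shz_def)

definition Tz :: "complex \<Rightarrow> real \<Rightarrow> real \<Rightarrow> real \<Rightarrow> complex \<Rightarrow> complex" where
  "Tz R \<mu> \<gamma> v z = exp (- of_real \<mu> * z) * (Chz R z + (of_real \<mu> + \<i> * of_real \<gamma> * of_real v) * Shz R z)"

lemma Tz_0[simp]: "Tz R \<mu> \<gamma> v 0 = 1" by (simp add: Tz_def)

lemma Tz_deriv:
  assumes R2: "R^2 = of_real (\<mu>^2 - \<gamma>^2)" and v: "v^2 = 1"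
  shows "(Tz R \<mu> \<gamma> v has_field_derivative
     ((\<i> * of_real \<gamma> * of_real v - of_real \<mu>) * Tz R \<mu> \<gamma> v z + of_real \<mu> * Tz R \<mu> \<gamma> (- v) z)) (at z)"
proof -
  have d: "(Tz R \<mu> \<gamma> v has_field_derivative
     (- of_real \<mu> * exp (- of_real \<mu> * z) * (Chz R z + (of_real \<mu> + \<i> * of_real \<gamma> * of_real v) * Shz R z)
      + exp (- of_real \<mu> * z) * (R^2 * Shz R z + (of_real \<mu> + \<i> * of_real \<gamma> * of_real v) * Chz R z))) (at z)"
    unfolding Tz_def
    by (rule derivative_eq_intros Chz_deriv Shz_deriv refl)+ (simp add: algebra_simps)
  have v2: "(of_real v :: complex)^2 = 1" using v by (metis of_real_eq_1_iff of_real_power)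
  have "- of_real \<mu> * exp (- of_real \<mu> * z) * (Chz R z + (of_real \<mu> + \<i> * of_real \<gamma> * of_real v) * Shz R z)
      + exp (- of_real \<mu> * z) * (R^2 * Shz R z + (of_real \<mu> + \<i> * of_real \<gamma> * of_real v) * Chz R z)
    = (\<i> * of_real \<gamma> * of_real v - of_real \<mu>) * Tz R \<mu> \<gamma> v z + of_real \<mu> * Tz R \<mu> \<gamma> (- v) z"
    unfolding Tz_def R2
    by (simp add: algebra_simps power2_eq_square v2[unfolded power2_eq_square])
  with d show ?thesis by simp
qed

definition v1 :: "nat \<Rightarrow> real" where "v1 j = (if j = 0 \<or> j = 3 then 1 else -1)"
definition v2 :: "nat \<Rightarrow> real" where "v2 j = (if j = 0 \<or> j = 1 then 1 else -1)"

definition Gz :: "real \<Rightarrow> real \<Rightarrow> real \<Rightarrow> real \<Rightarrow> real \<Rightarrow> nat \<Rightarrow> complex \<Rightarrow> complex" where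
  "Gz lam p c a b j z = Tz (Afun lam p c a b) (lam * p) (c * (a - b) / 2) (v1 j) z
                      * Tz (Bfun lam p c a b) (lam * (1 - p)) (c * (a + b) / 2) (v2 j) z"

lemma th_vals: "th a b 0 = a" "th a b 1 = b" "th a b 2 = - a" "th a b 3 = - b"
proof -
  have e3: "3 * pi / 2 = pi / 2 + pi" by simp
  have c3a: "cos (3 * pi / 2) = cos (pi / 2 + pi)" "sin (3 * pi / 2) = sin (pi / 2 + pi)" by (simp_all only: e3)
  have c3: "cos (3 * pi / 2) = 0" "sin (3 * pi / 2) = -1" by (simp_all only: c3a cos_periodic_pi sin_periodic_pi cos_pi_half sin_pi_half minus_zero)
  show "th a b 0 = a" "th a b 1 = b" "th a b 2 = - a" by (simp_all add: th_def)
  have c4: "cos (pi * 3 / 2) = 0" "sin (pi * 3 / 2) = -1" using c3 by (metis mult.commute)+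
  show "th a b 3 = - b" by (simp add: th_def c4)
qed

lemma th_Suc0: "th a b (Suc 0) = b" using th_vals(2) by simp

lemma cases4: "j < 4 \<Longrightarrow> j = 0 \<or> j = 1 \<or> j = 2 \<or> j = (3::nat)" by auto

lemma th_v: "j < 4 \<Longrightarrow> c * th a b j = c * (a - b) / 2 * v1 j + c * (a + b) / 2 * v2 j"
  by (drule cases4) (auto simp: th_vals th_Suc0 v1_def v2_def field_simps)

lemma stp_lt4: "stp j x < 4" by (simp add: stp_def)

lemma v_stp: "j < 4 \<Longrightarrow> v1 (stp j True) = - v1 j \<and> v2 (stp j True) = v2 j \<and> v1 (stp j False) = v1 j \<and> v2 (stp j False) = - v2 j"
  by (drule cases4) (auto simp: stp_def v1_def v2_def)

lemma v_sq: "(v1 j)^2 = 1" "(v2 j)^2 = 1" by (simp_all add: v1_def v2_def)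

lemma Afun_sq: "(Afun lam p c a b)^2 = of_real ((lam * p)^2 - (c * (a - b) / 2)^2)"
  unfolding Afun_def power_divide power2_csqrt by (simp add: field_simps power2_eq_square)
lemma Bfun_sq: "(Bfun lam p c a b)^2 = of_real ((lam * (1 - p))^2 - (c * (a + b) / 2)^2)"
  unfolding Bfun_def power_divide power2_csqrt by (simp add: field_simps power2_eq_square)

lemma Gz_0[simp]: "Gz lam p c a b j 0 = 1" by (simp add: Gz_def)

lemma Gz_deriv:
  assumes j: "j < 4"
  shows "(Gz lam p c a b j has_field_derivative
     ((\<i> * of_real (c * th a b j) - of_real lam) * Gz lam p c a b j z
      + of_real lam * (of_real p * Gz lam p c a b (stp j True) z + of_real (1 - p) * Gz lam p c a b (stp j False) z))) (at z)"
proof -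
  let ?A = "Afun lam p c a b" and ?B = "Bfun lam p c a b"
  let ?T1 = "Tz ?A (lam * p) (c * (a - b) / 2)" and ?T2 = "Tz ?B (lam * (1 - p)) (c * (a + b) / 2)"
  have d1: "(?T1 (v1 j) has_field_derivative
     ((\<i> * of_real (c * (a - b) / 2) * of_real (v1 j) - of_real (lam * p)) * ?T1 (v1 j) z + of_real (lam * p) * ?T1 (- v1 j) z)) (at z)"
    by (rule Tz_deriv[OF Afun_sq v_sq(1)])
  have d2: "(?T2 (v2 j) has_field_derivative
     ((\<i> * of_real (c * (a + b) / 2) * of_real (v2 j) - of_real (lam * (1 - p))) * ?T2 (v2 j) z + of_real (lam * (1 - p)) * ?T2 (- v2 j) z)) (at z)"
    by (rule Tz_deriv[OF Bfun_sq v_sq(2)])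
  have d: "(Gz lam p c a b j has_field_derivative
     (((\<i> * of_real (c * (a - b) / 2) * of_real (v1 j) - of_real (lam * p)) * ?T1 (v1 j) z + of_real (lam * p) * ?T1 (- v1 j) z) * ?T2 (v2 j) z
      + ?T1 (v1 j) z * ((\<i> * of_real (c * (a + b) / 2) * of_real (v2 j) - of_real (lam * (1 - p))) * ?T2 (v2 j) z + of_real (lam * (1 - p)) * ?T2 (- v2 j) z))) (at z)"
    unfolding Gz_def[abs_def] by (rule derivative_eq_intros d1 d2 refl | simp only: mult.commute)+
  have GT: "Gz lam p c a b (stp j True) z = ?T1 (- v1 j) z * ?T2 (v2 j) z"
           "Gz lam p c a b (stp j False) z = ?T1 (v1 j) z * ?T2 (- v2 j) z"
           "Gz lam p c a b j z = ?T1 (v1 j) z * ?T2 (v2 j) z"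
    using v_stp[OF j] by (simp_all add: Gz_def)
  have cth: "(of_real (c * th a b j) :: complex) = of_real (c * (a - b) / 2) * of_real (v1 j) + of_real (c * (a + b) / 2) * of_real (v2 j)"
    using th_v[OF j, of c a b] by (metis of_real_add of_real_mult)
  show ?thesis using d unfolding GT cth by (simp add: algebra_simps)
qed

definition Kint :: "real \<Rightarrow> real \<Rightarrow> (real \<Rightarrow> complex) \<Rightarrow> real \<Rightarrow> complex" where
  "Kint lam k u t = (\<integral>s. of_real (exponential_density lam s) * (if 0 \<le> s \<and> s \<le> t then cis (k * s) * u (t - s) else 0) \<partial>lborel)"

lemma dens_le: "0 < lam \<Longrightarrow> 0 \<le> s \<Longrightarrow> exponential_density lam s \<le> lam"
  by (simp add: exponential_density_def)

lemma Kint_integrable: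
  assumes lam: "0 < lam" and um: "(\<lambda>s. u (t - s)) \<in> borel_measurable borel"
    and ub: "\<And>x. 0 \<le> x \<Longrightarrow> x \<le> t \<Longrightarrow> norm (u x) \<le> B"
  shows "integrable lborel (\<lambda>s. of_real (exponential_density lam s) * (if 0 \<le> s \<and> s \<le> t then cis (k * s) * u (t - s) else 0))"
proof (rule Bochner_Integration.integrable_bound)
  show "integrable lborel (\<lambda>s. (lam * \<bar>B\<bar>) *\<^sub>R indicator {0..t} s :: real)"
    by (intro integrable_scaleR_right) (simp add: integrable_indicator_iff emeasure_lborel_Icc_eq)
  have [measurable]: "(\<lambda>s. u (t - s)) \<in> borel_measurable lborel" using um by (simp add: measurable_lborel1)
  have [measurable]: "exponential_density lam \<in> borel_measurable lborel"
    unfolding exponential_density_def[abs_def] by measurable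
  show "(\<lambda>s. of_real (exponential_density lam s) * (if 0 \<le> s \<and> s \<le> t then cis (k * s) * u (t - s) else 0)) \<in> borel_measurable lborel"
    unfolding cis_conv_exp by measurable
  show "AE s in lborel. norm (of_real (exponential_density lam s) * (if 0 \<le> s \<and> s \<le> t then cis (k * s) * u (t - s) else 0))
        \<le> norm ((lam * \<bar>B\<bar>) *\<^sub>R indicator {0..t} s :: real)"
  proof (rule AE_I2)
    fix s
    show "norm (of_real (exponential_density lam s) * (if 0 \<le> s \<and> s \<le> t then cis (k * s) * u (t - s) else 0))
        \<le> norm ((lam * \<bar>B\<bar>) *\<^sub>R indicator {0..t} s :: real)"
    proof (cases "0 \<le> s \<and> s \<le> t")
      case True
      have d: "0 \<le> exponential_density lam s" "exponential_density lam s \<le> lam"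
        using True lam by (auto simp: exponential_density_nonneg dens_le)
      have "norm (u (t - s)) \<le> \<bar>B\<bar>" using ub[of "t - s"] True by auto
      then have "exponential_density lam s * norm (u (t - s)) \<le> lam * \<bar>B\<bar>"
        using d by (intro mult_mono) auto
      then show ?thesis using True d lam by (simp add: norm_mult abs_mult)
    qed auto
  qed
qed

lemma Kint_diff:
  assumes lam: "0 < lam"
    and um: "(\<lambda>s. u (t - s)) \<in> borel_measurable borel" and ub: "\<And>x. 0 \<le> x \<Longrightarrow> x \<le> t \<Longrightarrow> norm (u x) \<le> Bu"
    and wm: "(\<lambda>s. w (t - s)) \<in> borel_measurable borel" and wb: "\<And>x. 0 \<le> x \<Longrightarrow> x \<le> t \<Longrightarrow> norm (w x) \<le> Bw"
  shows "Kint lam k u t - Kint lam k w t = Kint lam k (\<lambda>x. u x - w x) t"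
proof -
  have "Kint lam k u t - Kint lam k w t =
    (\<integral>s. of_real (exponential_density lam s) * (if 0 \<le> s \<and> s \<le> t then cis (k * s) * u (t - s) else 0)
       - of_real (exponential_density lam s) * (if 0 \<le> s \<and> s \<le> t then cis (k * s) * w (t - s) else 0) \<partial>lborel)"
    unfolding Kint_def
    using Bochner_Integration.integral_diff[OF Kint_integrable[OF lam um ub] Kint_integrable[OF lam wm wb]] by simp
  also have "\<dots> = Kint lam k (\<lambda>x. u x - w x) t"
    unfolding Kint_def by (intro Bochner_Integration.integral_cong) (auto simp: algebra_simps)
  finally show ?thesis .
qed

lemma poly_int:
  assumes t: "0 \<le> t"
  shows "(\<integral>s. indicator {0..t} s * (t - s)^N \<partial>lborel) = t^(Suc N) / real (Suc N)"
proof -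
  have cont: "continuous_on {0..t} (\<lambda>s. (t - s)^N)" by (intro continuous_intros)
  define FF where "FF s = (- 1 / real (Suc N)) * (t - s)^(Suc N)" for s
  have "((\<lambda>s. (t - s)^N) has_integral (FF t - FF 0)) {0..t}"
  proof (rule fundamental_theorem_of_calculus[OF t])
    fix x assume "x \<in> {0..t}"
    have nz: "real (Suc N) \<noteq> 0" by simp
    have "(FF has_real_derivative ((- 1 / real (Suc N)) * (real (Suc N) * (t - x)^N * (0 - 1)))) (at x within {0..t})"
      unfolding FF_def[abs_def] by (rule derivative_eq_intros refl)+ simp
    also have "((- 1 / real (Suc N)) * (real (Suc N) * (t - x)^N * (0 - 1))) = (t - x)^N" using nz by simp
    finally show "(FF has_vector_derivative (t - x)^N) (at x within {0..t})"
      by (simp add: has_real_derivative_iff_has_vector_derivative)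
  qed
  moreover have "FF t - FF 0 = t^(Suc N) / real (Suc N)" by (simp add: FF_def)
  ultimately have "((\<lambda>s. (t - s)^N) has_integral (t^(Suc N) / real (Suc N))) {0..t}" by simp
  then have "integral {0..t} (\<lambda>s. (t - s)^N) = t^(Suc N) / real (Suc N)" by (simp add: integral_unique)
  moreover have "(\<integral>s. indicator {0..t} s * (t - s)^N \<partial>lborel) = integral {0..t} (\<lambda>s. (t - s)^N)"
    using set_borel_integral_eq_integral(2)[OF borel_integrable_atLeastAtMost'[OF cont]]
    by (simp add: set_lebesgue_integral_def)
  ultimately show ?thesis by simp
qed

lemma Kint_bound:
  assumes lam: "0 < lam" and t: "0 \<le> t" and C: "0 \<le> C"
    and um: "(\<lambda>s. u (t - s)) \<in> borel_measurable borel"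
    and ub: "\<And>x. 0 \<le> x \<Longrightarrow> x \<le> t \<Longrightarrow> norm (u x) \<le> C * (lam * x)^N / fact N"
  shows "norm (Kint lam k u t) \<le> C * (lam * t)^(Suc N) / fact (Suc N)"
proof -
  let ?g = "\<lambda>s. of_real (exponential_density lam s) * (if 0 \<le> s \<and> s \<le> t then cis (k * s) * u (t - s) else 0)"
  let ?h = "\<lambda>s. indicator {0..t} s * (lam * (C * lam^N / fact N)) * (t - s)^N :: real"
  have ub': "norm (u x) \<le> C * (lam * t)^N / fact N" if "0 \<le> x" "x \<le> t" for x
  proof -
    have "(lam * x)^N \<le> (lam * t)^N" using that lam by (intro power_mono mult_left_mono) auto
    then have "C * (lam * x)^N / fact N \<le> C * (lam * t)^N / fact N"
      using C by (intro divide_right_mono mult_left_mono) auto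
    then show ?thesis using ub[OF that] by linarith
  qed
  have gi: "integrable lborel ?g" by (rule Kint_integrable[OF lam um ub'])
  have hi: "integrable lborel ?h"
  proof -
    have "set_integrable lborel {0..t} (\<lambda>s. (lam * (C * lam^N / fact N)) * (t - s)^N)"
      by (rule borel_integrable_atLeastAtMost') (intro continuous_intros)
    then show ?thesis by (simp add: set_integrable_def mult.assoc)
  qed
  have "norm (Kint lam k u t) \<le> (\<integral>s. norm (?g s) \<partial>lborel)"
    unfolding Kint_def by (rule integral_norm_bound)
  also have "\<dots> \<le> (\<integral>s. ?h s \<partial>lborel)"
  proof (rule integral_mono[OF integrable_norm[OF gi] hi])
    fix s
    show "norm (?g s) \<le> ?h s"
    proof (cases "0 \<le> s \<and> s \<le> t")
      case True
      have d: "0 \<le> exponential_density lam s" "exponential_density lam s \<le> lam"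
        using True lam by (auto simp: exponential_density_nonneg dens_le)
      have "norm (u (t - s)) \<le> C * (lam * (t - s))^N / fact N" using ub[of "t - s"] True by auto
      also have "\<dots> = (C * lam^N / fact N) * (t - s)^N" by (simp add: power_mult_distrib)
      finally have "exponential_density lam s * norm (u (t - s)) \<le> lam * ((C * lam^N / fact N) * (t - s)^N)"
        using d by (intro mult_mono) auto
      then show ?thesis using True d by (simp add: norm_mult mult.assoc)
    qed auto
  qed
  also have "(\<integral>s. ?h s \<partial>lborel) = (lam * (C * lam^N / fact N)) * (\<integral>s. indicator {0..t} s * (t - s)^N \<partial>lborel)"
    by (subst integral_mult_right_zero[symmetric]) (simp add: mult_ac)
  also have "\<dots> = C * (lam * t)^(Suc N) / fact (Suc N)"
    unfolding poly_int[OF t] by (simp add: field_simps power_mult_distrib fact_Suc)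
  finally show ?thesis .
qed

definition Gr :: "real \<Rightarrow> real \<Rightarrow> real \<Rightarrow> real \<Rightarrow> real \<Rightarrow> nat \<Rightarrow> real \<Rightarrow> complex" where
  "Gr lam p c a b j t = Gz lam p c a b j (of_real t)"

lemma Gz_isCont: "j < 4 \<Longrightarrow> isCont (Gz lam p c a b j) z"
  using Gz_deriv DERIV_isCont by blast

lemma Gr_cont_shift: "j < 4 \<Longrightarrow> continuous_on S (\<lambda>s. Gr lam p c a b j (t - s))"
  unfolding Gr_def
  by (intro continuous_at_imp_continuous_on ballI continuous_intros isCont_o2[OF _ Gz_isCont]) auto

lemma Gr_cont: "j < 4 \<Longrightarrow> continuous_on S (Gr lam p c a b j)"
  unfolding Gr_def
  by (intro continuous_at_imp_continuous_on ballI continuous_intros isCont_o2[OF _ Gz_isCont]) auto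

lemma Kint_cont:
  assumes "0 \<le> t" and cu: "continuous_on {0..t} (\<lambda>s. u (t - s))"
  shows "Kint lam k u t = integral {0..t} (\<lambda>s. of_real (lam * exp (- lam * s)) * (cis (k * s) * u (t - s)))"
proof -
  have ci: "continuous_on {0..t} (\<lambda>s. of_real (lam * exp (- lam * s)) * (cis (k * s) * u (t - s)))"
    unfolding cis_conv_exp by (intro continuous_intros cu)
  have "Kint lam k u t = (\<integral>s. indicator {0..t} s *\<^sub>R (of_real (lam * exp (- lam * s)) * (cis (k * s) * u (t - s))) \<partial>lborel)"
    unfolding Kint_def
    by (intro Bochner_Integration.integral_cong) (auto simp: exponential_density_def indicator_def mult_ac)
  also have "\<dots> = integral {0..t} (\<lambda>s. of_real (lam * exp (- lam * s)) * (cis (k * s) * u (t - s)))"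
    using set_borel_integral_eq_integral(2)[OF borel_integrable_atLeastAtMost'[OF ci]]
    by (simp add: set_lebesgue_integral_def)
  finally show ?thesis .
qed

lemma exp_split: "exp ((\<i> * of_real k - of_real lam) * of_real s) = of_real (exp (- lam * s)) * cis (k * s)"
proof -
  have "(\<i> * of_real k - of_real lam) * of_real s = of_real (- lam * s) + \<i> * of_real (k * s)"
    by (simp add: algebra_simps)
  then show ?thesis by (subst (1) \<open>_ = _\<close>) (simp only: exp_add cis_conv_exp exp_of_real)
qed

lemma G_inteq:
  assumes j: "j < 4" and t: "0 \<le> t"
  shows "Gr lam p c a b j t = of_real (exp (- lam * t)) * cis (c * th a b j * t)
     + of_real p * Kint lam (c * th a b j) (Gr lam p c a b (stp j True)) t
     + of_real (1 - p) * Kint lam (c * th a b j) (Gr lam p c a b (stp j False)) t"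
proof -
  define k where "k = c * th a b j"
  let ?G = "Gz lam p c a b"
  define E where "E z = exp ((\<i> * of_real k - of_real lam) * z)" for z
  define D where "D z = of_real lam * (of_real p * ?G (stp j True) z + of_real (1 - p) * ?G (stp j False) z)" for z
  define \<Psi> where "\<Psi> z = E z * ?G j (of_real t - z)" for z
  have dPsi: "(\<Psi> has_field_derivative (- (E z * D (of_real t - z)))) (at z)" for z
  proof -
    have dE: "(E has_field_derivative ((\<i> * of_real k - of_real lam) * E z)) (at z)"
      unfolding E_def by (rule derivative_eq_intros refl)+ simp
    have dG: "((\<lambda>z. ?G j (of_real t - z)) has_field_derivative
        (((\<i> * of_real k - of_real lam) * ?G j (of_real t - z) + D (of_real t - z)) * (- 1))) (at z)"
    proof -
      have dl: "((\<lambda>z. of_real t - z) has_field_derivative (- 1)) (at z)"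
        by (rule derivative_eq_intros refl | simp)+
      from DERIV_chain2[OF Gz_deriv[OF j, of lam p c a b "of_real t - z", folded k_def D_def] dl]
      show ?thesis by simp
    qed
    show ?thesis unfolding \<Psi>_def[abs_def]
      by (rule derivative_eq_intros dE dG refl)+ (simp add: algebra_simps)
  qed
  define h where "h s = of_real (lam * exp (- lam * s)) * cis (k * s) *
      (of_real p * Gr lam p c a b (stp j True) (t - s) + of_real (1 - p) * Gr lam p c a b (stp j False) (t - s))" for s
  have "((\<lambda>s. - (E (of_real s) * D (of_real t - of_real s))) has_integral (\<Psi> (of_real t) - \<Psi> (of_real 0))) {0..t}"
  proof (rule fundamental_theorem_of_calculus[OF t])
    fix x assume "x \<in> {0..t}"
    show "((\<lambda>s. \<Psi> (of_real s)) has_vector_derivative - (E (of_real x) * D (of_real t - of_real x))) (at x within {0..t})"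
      by (rule has_vector_derivative_real_field[OF dPsi])
  qed
  moreover have "(\<lambda>s. - (E (of_real s) * D (of_real t - of_real s))) = (\<lambda>s. - h s)"
  proof
    fix s
    show "- (E (of_real s) * D (of_real t - of_real s)) = - h s"
      unfolding E_def exp_split by (simp add: D_def h_def Gr_def algebra_simps)
  qed
  moreover have "\<Psi> (of_real t) = of_real (exp (- lam * t)) * cis (k * t)"
    by (simp add: \<Psi>_def E_def exp_split)
  moreover have "\<Psi> (of_real 0) = Gr lam p c a b j t" by (simp add: \<Psi>_def E_def Gr_def)
  ultimately have "((\<lambda>s. - h s) has_integral (of_real (exp (- lam * t)) * cis (k * t) - Gr lam p c a b j t)) {0..t}"
    by simp
  from has_integral_neg[OF this]
  have hI: "(h has_integral (Gr lam p c a b j t - of_real (exp (- lam * t)) * cis (k * t))) {0..t}" by simp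
  define hT where "hT s = of_real (lam * exp (- lam * s)) * (cis (k * s) * Gr lam p c a b (stp j True) (t - s))" for s
  define hF where "hF s = of_real (lam * exp (- lam * s)) * (cis (k * s) * Gr lam p c a b (stp j False) (t - s))" for s
  have cT: "continuous_on {0..t} hT" unfolding hT_def cis_conv_exp
    by (intro continuous_intros Gr_cont_shift stp_lt4)
  have cF: "continuous_on {0..t} hF" unfolding hF_def cis_conv_exp
    by (intro continuous_intros Gr_cont_shift stp_lt4)
  have iT: "(hT has_integral integral {0..t} hT) {0..t}" using integrable_continuous_interval[OF cT] by (simp add: integrable_integral)
  have iF: "(hF has_integral integral {0..t} hF) {0..t}" using integrable_continuous_interval[OF cF] by (simp add: integrable_integral)
  have "((\<lambda>s. of_real p * hT s + of_real (1 - p) * hF s) has_integral (of_real p * integral {0..t} hT + of_real (1 - p) * integral {0..t} hF)) {0..t}"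
    by (intro has_integral_add has_integral_mult_right iT iF)
  moreover have "(\<lambda>s. of_real p * hT s + of_real (1 - p) * hF s) = h"
    by (auto simp: hT_def hF_def h_def algebra_simps)
  ultimately have "Gr lam p c a b j t - of_real (exp (- lam * t)) * cis (k * t) = of_real p * integral {0..t} hT + of_real (1 - p) * integral {0..t} hF"
    using hI has_integral_unique by metis
  moreover have "Kint lam k (Gr lam p c a b (stp j True)) t = integral {0..t} hT"
    unfolding hT_def by (rule Kint_cont[OF t Gr_cont_shift[OF stp_lt4]])
  moreover have "Kint lam k (Gr lam p c a b (stp j False)) t = integral {0..t} hF"
    unfolding hF_def by (rule Kint_cont[OF t Gr_cont_shift[OF stp_lt4]])
  ultimately show ?thesis unfolding k_def by (simp add: algebra_simps)
qed

lemma Kint_sum: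
  assumes lam: "0 < lam"
    and um: "\<And>n. (\<lambda>s. u n (t - s)) \<in> borel_measurable borel" and ub: "\<And>n x. 0 \<le> x \<Longrightarrow> x \<le> t \<Longrightarrow> norm (u n x) \<le> B"
  shows "Kint lam k (\<lambda>x. \<Sum>n<N. u n x) t = (\<Sum>n<N. Kint lam k (u n) t)"
proof -
  have "Kint lam k (\<lambda>x. \<Sum>n<N. u n x) t =
     (\<integral>s. (\<Sum>n<N. of_real (exponential_density lam s) * (if 0 \<le> s \<and> s \<le> t then cis (k * s) * u n (t - s) else 0)) \<partial>lborel)"
    unfolding Kint_def by (intro Bochner_Integration.integral_cong) (auto simp: sum_distrib_left sum_distrib_right)
  also have "\<dots> = (\<Sum>n<N. Kint lam k (u n) t)"
    unfolding Kint_def by (rule Bochner_Integration.integral_sum) (rule Kint_integrable[OF lam um ub])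
  finally show ?thesis .
qed

lemma Gr_bounded: "\<exists>C. 0 \<le> C \<and> (\<forall>j<4. \<forall>x\<in>{0..t}. norm (Gr lam p c a b j x) \<le> C)"
proof -
  have b1: "bounded (Gr lam p c a b j ` {0..t})" if "j < 4" for j
    using compact_imp_bounded[OF compact_continuous_image[OF Gr_cont[OF that] compact_Icc]] .
  have "bounded (\<Union>j<4. Gr lam p c a b j ` {0..t})"
    by (rule bounded_UN) (auto intro: b1)
  then obtain C where C: "\<And>z. z \<in> (\<Union>j<4. Gr lam p c a b j ` {0..t}) \<Longrightarrow> norm z \<le> C"
    unfolding bounded_iff by blast
  show ?thesis
  proof (intro exI[of _ "max C 0"] conjI allI impI ballI)
    fix j x assume "j < (4::nat)" "x \<in> {0..t}"
    then have "norm (Gr lam p c a b j x) \<le> C" by (intro C UN_I[of j]) auto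
    then show "norm (Gr lam p c a b j x) \<le> max C 0" by linarith
  qed simp
qed

lemma Gr_meas: "j < 4 \<Longrightarrow> (\<lambda>s. Gr lam p c a b j (t - s)) \<in> borel_measurable borel"
  by (rule borel_measurable_continuous_onI) (rule Gr_cont_shift)

lemma picard:
  fixes f :: "nat \<Rightarrow> nat \<Rightarrow> real \<Rightarrow> complex"
  assumes lam: "0 < lam" and p: "0 \<le> p" "p \<le> 1"
    and f0: "\<And>j x. 0 \<le> x \<Longrightarrow> f 0 j x = of_real (exp (- lam * x)) * cis (c * th a b j * x)"
    and fS: "\<And>n j x. f (Suc n) j x = of_real p * Kint lam (c * th a b j) (f n (stp j True)) x
                                   + of_real (1 - p) * Kint lam (c * th a b j) (f n (stp j False)) x"
    and fm: "\<And>n j x. (\<lambda>s. f n j (x - s)) \<in> borel_measurable borel"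
    and fb: "\<And>n j x. norm (f n j x) \<le> 1"
    and j: "j < 4" and t: "0 \<le> t"
  shows "(\<lambda>N. \<Sum>n<N. f n j t) \<longlonglongrightarrow> Gr lam p c a b j t"
proof -
  define R where "R N j x = Gr lam p c a b j x - (\<Sum>n<N. f n j x)" for N j x
  have Rm: "(\<lambda>s. R N j' (x - s)) \<in> borel_measurable borel" if "j' < 4" for N j' x
    unfolding R_def using Gr_meas[OF that] fm by measurable
  obtain C where C0: "0 \<le> C" and C: "\<And>j x. j < 4 \<Longrightarrow> x \<in> {0..t} \<Longrightarrow> norm (Gr lam p c a b j x) \<le> C"
    using Gr_bounded[of t lam p c a b] by blast
  have Rb: "norm (R N j' x) \<le> C + real N" if "j' < 4" "0 \<le> x" "x \<le> t" for N j' x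
  proof -
    have "norm (\<Sum>n<N. f n j' x) \<le> (\<Sum>n<N. norm (f n j' x))" by (rule norm_sum)
    also have "\<dots> \<le> (\<Sum>n<N. 1)" by (intro sum_mono fb)
    finally have "norm (\<Sum>n<N. f n j' x) \<le> real N" by simp
    then show ?thesis unfolding R_def using C[of j' x] that norm_triangle_ineq4 by (smt (verit) atLeastAtMost_iff)
  qed
  have rec: "R (Suc N) j' x = of_real p * Kint lam (c * th a b j') (R N (stp j' True)) x
                 + of_real (1 - p) * Kint lam (c * th a b j') (R N (stp j' False)) x"
    if j': "j' < 4" and x: "0 \<le> x" "x \<le> t" for N j' x
  proof -
    let ?k = "c * th a b j'"
    have sT: "Kint lam ?k (\<lambda>y. \<Sum>n<N. f n (stp j' bb) y) x = (\<Sum>n<N. Kint lam ?k (f n (stp j' bb)) x)" for bb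
      by (rule Kint_sum[OF lam fm]) (rule fb)
    have dT: "Kint lam ?k (Gr lam p c a b (stp j' bb)) x - Kint lam ?k (\<lambda>y. \<Sum>n<N. f n (stp j' bb) y) x
            = Kint lam ?k (R N (stp j' bb)) x" for bb
    proof -
      have "norm (\<Sum>n<N. f n (stp j' bb) y) \<le> real N" for y
      proof -
        have "norm (\<Sum>n<N. f n (stp j' bb) y) \<le> (\<Sum>n<N. norm (f n (stp j' bb) y))" by (rule norm_sum)
        also have "\<dots> \<le> (\<Sum>n<N. 1)" by (intro sum_mono fb)
        finally show ?thesis by simp
      qed
      moreover have "(\<lambda>s. \<Sum>n<N. f n (stp j' bb) (x - s)) \<in> borel_measurable borel" using fm by measurable
      ultimately show ?thesis unfolding R_def[abs_def]
        by (intro Kint_diff[OF lam Gr_meas[OF stp_lt4], where Bu=C and Bw="real N"]) (use C[OF stp_lt4] x in auto)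
    qed
    have "R (Suc N) j' x = Gr lam p c a b j' x - f 0 j' x - (\<Sum>n<N. f (Suc n) j' x)"
      unfolding R_def by (subst sum.lessThan_Suc_shift) (simp add: algebra_simps)
    also have "\<dots> = of_real p * (Kint lam ?k (Gr lam p c a b (stp j' True)) x - (\<Sum>n<N. Kint lam ?k (f n (stp j' True)) x))
       + of_real (1 - p) * (Kint lam ?k (Gr lam p c a b (stp j' False)) x - (\<Sum>n<N. Kint lam ?k (f n (stp j' False)) x))"
    proof -
      have "(\<Sum>n<N. f (Suc n) j' x) = of_real p * (\<Sum>n<N. Kint lam ?k (f n (stp j' True)) x)
          + of_real (1 - p) * (\<Sum>n<N. Kint lam ?k (f n (stp j' False)) x)"
        unfolding fS by (simp add: sum.distrib sum_distrib_left)
      then show ?thesis unfolding G_inteq[OF j' x(1)] f0[OF x(1)] by (simp add: algebra_simps)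
    qed
    also have "\<dots> = of_real p * Kint lam ?k (R N (stp j' True)) x + of_real (1 - p) * Kint lam ?k (R N (stp j' False)) x"
      by (simp only: sT[symmetric] dT)
    finally show ?thesis .
  qed
  have bound: "norm (R N j' x) \<le> C * (lam * x)^N / fact N" if "j' < 4" "0 \<le> x" "x \<le> t" for N j' x
    using that
  proof (induction N arbitrary: j' x)
    case 0
    then show ?case using C[of j' x] by (simp add: R_def)
  next
    case (Suc N)
    have kb: "norm (Kint lam (c * th a b j') (R N (stp j' bb)) x) \<le> C * (lam * x)^(Suc N) / fact (Suc N)" for bb
      by (rule Kint_bound[OF lam Suc.prems(2) C0 Rm[OF stp_lt4]]) (use Suc.IH[OF stp_lt4] Suc.prems in auto)
    have "norm (R (Suc N) j' x) \<le> p * norm (Kint lam (c * th a b j') (R N (stp j' True)) x)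
           + (1 - p) * norm (Kint lam (c * th a b j') (R N (stp j' False)) x)"
      unfolding rec[OF Suc.prems] using p
      by (metis (no_types, lifting) abs_of_nonneg diff_ge_0_iff_ge norm_mult norm_of_real norm_triangle_ineq)
    also have "\<dots> \<le> p * (C * (lam * x)^(Suc N) / fact (Suc N)) + (1 - p) * (C * (lam * x)^(Suc N) / fact (Suc N))"
      using p by (intro add_mono mult_left_mono kb) auto
    also have "\<dots> = (p + (1 - p)) * (C * (lam * x)^(Suc N) / fact (Suc N))" by (simp only: distrib_right)
    also have "\<dots> = C * (lam * x)^(Suc N) / fact (Suc N)" by simp
    finally show ?case .
  qed
  have lim0: "(\<lambda>N. C * ((lam * t)^N / fact N)) \<longlonglongrightarrow> 0"
  proof -
    have "summable (\<lambda>N. (lam * t)^N / fact N)"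
      using exp_converges[of "lam * t"] by (simp add: sums_iff divide_inverse mult.commute)
    then have "(\<lambda>N. (lam * t)^N / fact N) \<longlonglongrightarrow> 0" by (rule summable_LIMSEQ_zero)
    then show ?thesis by (intro tendsto_mult_right_zero)
  qed
  have "(\<lambda>N. R N j t) \<longlonglongrightarrow> 0"
    by (rule Lim_null_comparison[OF _ lim0]) (use bound[OF j t order_refl] in simp)
  then have "(\<lambda>N. Gr lam p c a b j t - R N j t) \<longlonglongrightarrow> Gr lam p c a b j t - 0"
    by (intro tendsto_intros)
  then show ?thesis by (simp add: R_def)
qed

lemma Tz_pair: "Tz R \<mu> \<gamma> 1 (of_real t) + Tz R \<mu> \<gamma> (-1) (of_real t) = of_real (exp (- \<mu> * t)) * phi R \<mu> t"
proof -
  have e: "exp (- of_real \<mu> * of_real t) = (of_real (exp (- \<mu> * t)) :: complex)"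
    by (simp add: exp_of_real[symmetric])
  have "Tz R \<mu> \<gamma> 1 (of_real t) + Tz R \<mu> \<gamma> (-1) (of_real t) = exp (- of_real \<mu> * of_real t) * (2 * Chz R (of_real t) + 2 * of_real \<mu> * Shz R (of_real t))"
    by (simp add: Tz_def algebra_simps)
  also have "2 * Chz R (of_real t) + 2 * of_real \<mu> * Shz R (of_real t) = phi R \<mu> t"
  proof (cases "R = 0")
    case True then show ?thesis by (simp add: Chz_def Shz_def phi_def)
  next
    case False then show ?thesis by (simp add: Chz_def Shz_def phi_def field_simps)
  qed
  also note e
  finally show ?thesis .
qed

lemma final_formula:
  "(\<Sum>j<4. Gr lam p c a b j t) / 4 = of_real (exp (- lam * t) / 4) * phi (Afun lam p c a b) (lam * p) t * phi (Bfun lam p c a b) (lam * (1 - p)) t"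
proof -
  let ?T1 = "\<lambda>v. Tz (Afun lam p c a b) (lam * p) (c * (a - b) / 2) v (of_real t)"
  let ?T2 = "\<lambda>v. Tz (Bfun lam p c a b) (lam * (1 - p)) (c * (a + b) / 2) v (of_real t)"
  have "(\<Sum>j<4. Gr lam p c a b j t) = (?T1 1 + ?T1 (-1)) * (?T2 1 + ?T2 (-1))"
    by (simp add: eval_nat_numeral Gr_def Gz_def v1_def v2_def algebra_simps)
  also have "\<dots> = of_real (exp (- (lam * p) * t)) * phi (Afun lam p c a b) (lam * p) t * (of_real (exp (- (lam * (1 - p)) * t)) * phi (Bfun lam p c a b) (lam * (1 - p)) t)"
    by (simp only: Tz_pair)
  also have "of_real (exp (- (lam * p) * t)) * of_real (exp (- (lam * (1 - p)) * t)) = (of_real (exp (- lam * t)) :: complex)"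
    by (simp flip: of_real_mult exp_add add: algebra_simps)
  ultimately show ?thesis by (simp add: algebra_simps)
qed

lemma sum_H:
  assumes "ev n0 t \<tau>"
  shows "(\<Sum>n<N. H c a b n j t \<tau> x) = (if n0 < N then H c a b n0 j t \<tau> x else 0)"
proof -
  have "(\<Sum>n<N. H c a b n j t \<tau> x) = (\<Sum>n<N. if n0 = n then H c a b n0 j t \<tau> x else 0)"
    by (intro sum.cong refl) (use assms ev_unique in \<open>auto simp: H_explicit\<close>)
  then show ?thesis by (simp add: sum.delta)
qed

lemma sum_H0:
  assumes "\<not> (\<exists>n. ev n t \<tau>)"
  shows "(\<Sum>n<N. H c a b n j t \<tau> x) = 0"
  using assms by (simp add: H_explicit)

lemma norm_sum_H: "norm (\<Sum>n<N. H c a b n j t \<tau> x) \<le> 1"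
proof (cases "\<exists>n. ev n t \<tau>")
  case True
  then obtain n0 where "ev n0 t \<tau>" by blast
  then show ?thesis by (simp add: sum_H norm_H_le)
qed (simp add: sum_H0)

context orw
begin

lemma F_shift: "F n m j t = F n 0 j t"
proof (induction n arbitrary: m j t)
  case 0
  then show ?case by (simp add: F_base)
next
  case (Suc n)
  show ?case unfolding F_Suc Suc.IH[of "Suc m"] Suc.IH[of "Suc 0"] ..
qed

definition ff :: "nat \<Rightarrow> nat \<Rightarrow> real \<Rightarrow> complex" where "ff n j t = F n 0 j t"

lemma ff_0: "0 \<le> x \<Longrightarrow> ff 0 j x = of_real (exp (- lam * x)) * cis (c * th a b j * x)"
  by (simp add: ff_def F_base mult_ac)

lemma ff_Suc: "ff (Suc n) j x = of_real p * Kint lam (c * th a b j) (ff n (stp j True)) x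
                                   + of_real (1 - p) * Kint lam (c * th a b j) (ff n (stp j False)) x"
proof -
  have e: "c * th a b j * s = c * s * th a b j" for s by simp
  show ?thesis unfolding ff_def F_Suc Kint_def e F_shift[of n "Suc 0"] by simp
qed

lemma ff_meas: "(\<lambda>s. ff n j (x - s)) \<in> borel_measurable borel"
  unfolding ff_def by (rule F_meas)

lemma ff_bound: "norm (ff n j x) \<le> 1"
proof -
  have "norm (ff n j x) \<le> (\<integral>\<omega>. norm (H c a b n j x (\<lambda>k. \<tau> (0 + k) \<omega>) (\<lambda>k. \<xi> (0 + k) \<omega>)) \<partial>M)"
    unfolding ff_def F_def by (rule integral_norm_bound)
  also have "\<dots> \<le> (\<integral>\<omega>. 1 \<partial>M)"
    by (intro integral_mono integrable_norm H_int) (auto simp: norm_H_le)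
  finally show ?thesis by (simp add: prob_space)
qed

lemma ff_lim: "j < 4 \<Longrightarrow> 0 \<le> t \<Longrightarrow> (\<lambda>N. \<Sum>n<N. ff n j t) \<longlonglongrightarrow> Gr lam p c a b j t"
  by (rule picard[OF lam _ _ ff_0 ff_Suc ff_meas ff_bound]) (use p0 p1 in auto)

lemma D0_mod: assumes j: "j < 4" shows "prob {\<omega> \<in> space M. D0 \<omega> mod 4 = j} = 1/4"
proof -
  define A where "A i = {\<omega> \<in> space M. D0 \<omega> mod 4 = i}" for i
  have Aev: "A i \<in> events" for i unfolding A_def by measurable
  have ge: "prob (A i) \<ge> 1/4" if "i < 4" for i
  proof -
    have "{\<omega> \<in> space M. D0 \<omega> = i} \<subseteq> A i" using that by (auto simp: A_def)
    then have "prob {\<omega> \<in> space M. D0 \<omega> = i} \<le> prob (A i)" by (intro finite_measure_mono Aev)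
    then show ?thesis using D0d that by simp
  qed
  have "(\<Union>i\<in>{..<4}. A i) = space M" by (auto simp: A_def)
  moreover have "prob (\<Union>i\<in>{..<4}. A i) = (\<Sum>i<4. prob (A i))"
    by (rule measure_finite_Union) (auto simp: Aev disjoint_family_on_def A_def)
  ultimately have s1: "(\<Sum>i<4. prob (A i)) = 1" by (simp add: prob_space)
  have "(\<Sum>i<4. prob (A i)) = prob (A j) + (\<Sum>i\<in>{..<4} - {j}. prob (A i))"
    using j by (subst sum.remove[of _ j]) auto
  moreover have "(\<Sum>i\<in>{..<4} - {j}. prob (A i)) \<ge> (\<Sum>i\<in>{..<4} - {j}. 1/4)"
    by (intro sum_mono ge) auto
  moreover have "card ({..<4::nat} - {j}) = 3" using j by simp
  ultimately have "prob (A j) \<le> 1/4" using s1 by simp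
  with ge[OF j] show ?thesis unfolding A_def by simp
qed

lemma E_H: "(\<integral>\<omega>. H c a b n (D0 \<omega> mod 4) t (\<lambda>k. \<tau> k \<omega>) (\<lambda>k. \<xi> k \<omega>) \<partial>M) = (\<Sum>j<4. ff n j t) / 4"
proof -
  have Hm: "(\<lambda>\<omega>. H c a b n j t (\<lambda>k. \<tau> k \<omega>) (\<lambda>k. \<xi> k \<omega>)) \<in> borel_measurable M" for j
    by (rule H_meas) simp_all
  have "(\<integral>\<omega>. H c a b n (D0 \<omega> mod 4) t (\<lambda>k. \<tau> k \<omega>) (\<lambda>k. \<xi> k \<omega>) \<partial>M)
      = (\<integral>\<omega>. (\<Sum>j<4. (if D0 \<omega> mod 4 = j then 1 else 0) * H c a b n j t (\<lambda>k. \<tau> k \<omega>) (\<lambda>k. \<xi> k \<omega>)) \<partial>M)"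
  proof (intro Bochner_Integration.integral_cong refl)
    fix \<omega>
    have "(\<Sum>j<4. (if D0 \<omega> mod 4 = j then 1 else 0) * H c a b n j t (\<lambda>k. \<tau> k \<omega>) (\<lambda>k. \<xi> k \<omega>))
        = (\<Sum>j<4. if D0 \<omega> mod 4 = j then H c a b n j t (\<lambda>k. \<tau> k \<omega>) (\<lambda>k. \<xi> k \<omega>) else 0)"
      by (intro sum.cong) auto
    also have "\<dots> = H c a b n (D0 \<omega> mod 4) t (\<lambda>k. \<tau> k \<omega>) (\<lambda>k. \<xi> k \<omega>)"
      by (simp add: sum.delta')
    finally show "H c a b n (D0 \<omega> mod 4) t (\<lambda>k. \<tau> k \<omega>) (\<lambda>k. \<xi> k \<omega>) = (\<Sum>j<4. (if D0 \<omega> mod 4 = j then 1 else 0) * H c a b n j t (\<lambda>k. \<tau> k \<omega>) (\<lambda>k. \<xi> k \<omega>))" ..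
  qed
  also have "\<dots> = (\<Sum>j<4. (\<integral>\<omega>. (if D0 \<omega> mod 4 = j then 1 else 0) * H c a b n j t (\<lambda>k. \<tau> k \<omega>) (\<lambda>k. \<xi> k \<omega>) \<partial>M))"
  proof (rule Bochner_Integration.integral_sum)
    fix j :: nat
    note Hm[measurable]
    show "integrable M (\<lambda>\<omega>. (if D0 \<omega> mod 4 = j then 1 else 0) * H c a b n j t (\<lambda>k. \<tau> k \<omega>) (\<lambda>k. \<xi> k \<omega>))"
    proof (rule integrable_const_bound[where B=1])
      show "AE \<omega> in M. norm ((if D0 \<omega> mod 4 = j then 1 else 0) * H c a b n j t (\<lambda>k. \<tau> k \<omega>) (\<lambda>k. \<xi> k \<omega>)) \<le> 1"
        by (simp add: norm_H_le)
      show "(\<lambda>\<omega>. (if D0 \<omega> mod 4 = j then 1 else 0) * H c a b n j t (\<lambda>k. \<tau> k \<omega>) (\<lambda>k. \<xi> k \<omega>)) \<in> borel_measurable M"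
        by measurable
    qed
  qed
  also have "\<dots> = (\<Sum>j<4. ff n j t / 4)"
  proof (intro sum.cong refl)
    fix j :: nat assume j: "j \<in> {..<4}"
    let ?S = "PiM {Dir0} (\<lambda>_. borel :: real measure)"
    let ?T = "PiM (L 0) (\<lambda>_. borel :: real measure)"
    have indD: "indep_var ?S (\<lambda>\<omega>. restrict (\<lambda>i. src i \<omega>) {Dir0}) ?T (\<lambda>\<omega>. restrict (\<lambda>i. src i \<omega>) (L 0))"
      by (rule indep_var_restrict[OF ind]) (auto simp: L_def)
    have w1: "Wait k \<in> L 0" for k by (simp add: L_def)
    have w2: "Turn k \<in> L 0" for k by (simp add: L_def)
    have m1[measurable]: "(\<lambda>y. y (Wait k)) \<in> borel_measurable ?T" for k by (rule measurable_component_singleton[OF w1])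
    have m2[measurable]: "(\<lambda>y. y (Turn k)) \<in> borel_measurable ?T" for k by (rule measurable_component_singleton[OF w2])
    have m0[measurable]: "(\<lambda>y. y Dir0) \<in> borel_measurable ?S" by (rule measurable_component_singleton) simp
    define fx where "fx y = (if nat \<lfloor>y Dir0\<rfloor> mod 4 = j then 1 else 0 :: complex)" for y :: "src \<Rightarrow> real"
    define hy where "hy y = H c a b n j t (\<lambda>k. y (Wait k)) (\<lambda>k. y (Turn k) = 1)" for y :: "src \<Rightarrow> real"
    have fxm: "fx \<in> borel_measurable ?S" unfolding fx_def[abs_def] by measurable
    have hym: "hy \<in> borel_measurable ?T" unfolding hy_def[abs_def] by (rule H_meas) measurable
    have "(\<integral>\<omega>. fx (restrict (\<lambda>i. src i \<omega>) {Dir0}) * hy (restrict (\<lambda>i. src i \<omega>) (L 0)) \<partial>M)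
        = (\<integral>\<omega>. fx (restrict (\<lambda>i. src i \<omega>) {Dir0}) \<partial>M) * (\<integral>\<omega>. hy (restrict (\<lambda>i. src i \<omega>) (L 0)) \<partial>M)"
      by (rule indep_integral_prod[OF indD fxm hym, where Bf=1 and Bh=1]) (auto simp: fx_def hy_def norm_H_le)
    moreover have "fx (restrict (\<lambda>i. src i \<omega>) {Dir0}) = (if D0 \<omega> mod 4 = j then 1 else 0)" for \<omega>
      by (simp add: fx_def)
    moreover have "hy (restrict (\<lambda>i. src i \<omega>) (L 0)) = H c a b n j t (\<lambda>k. \<tau> k \<omega>) (\<lambda>k. \<xi> k \<omega>)" for \<omega>
      by (simp add: hy_def w1 w2)
    moreover have "(\<integral>\<omega>. (if D0 \<omega> mod 4 = j then 1 else 0 :: complex) \<partial>M) = 1/4"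
    proof -
      have "(\<integral>\<omega>. (if D0 \<omega> mod 4 = j then 1 else 0 :: complex) \<partial>M) = (\<integral>\<omega>. of_real (indicator {\<omega> \<in> space M. D0 \<omega> mod 4 = j} \<omega>) \<partial>M)"
        by (intro Bochner_Integration.integral_cong) (auto simp: indicator_def)
      also have "\<dots> = of_real (prob {\<omega> \<in> space M. D0 \<omega> mod 4 = j})"
        by (simp add: Int_absorb2)
      also have "\<dots> = 1/4"
      proof -
        have "prob {\<omega> \<in> space M. D0 \<omega> mod 4 = j} = 1/4" using D0_mod[of j] j by simp
        then show ?thesis unfolding \<open>prob _ = _\<close> by simp
      qed
      finally show ?thesis .
    qed
    ultimately show "(\<integral>\<omega>. (if D0 \<omega> mod 4 = j then 1 else 0) * H c a b n j t (\<lambda>k. \<tau> k \<omega>) (\<lambda>k. \<xi> k \<omega>) \<partial>M) = ff n j t / 4"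
      by (simp add: ff_def F_def)
  qed
  also have "\<dots> = (\<Sum>j<4. ff n j t) / 4" by (simp add: sum_divide_distrib)
  finally show ?thesis .
qed

lemma series: "0 \<le> t \<Longrightarrow> (\<lambda>N. \<Sum>n<N. (\<integral>\<omega>. H c a b n (D0 \<omega> mod 4) t (\<lambda>k. \<tau> k \<omega>) (\<lambda>k. \<xi> k \<omega>) \<partial>M))
    \<longlonglongrightarrow> (\<Sum>j<4. Gr lam p c a b j t) / 4"
proof -
  assume t: "0 \<le> t"
  have "(\<lambda>N. (\<Sum>j<4. \<Sum>n<N. ff n j t) / 4) \<longlonglongrightarrow> (\<Sum>j<4. Gr lam p c a b j t) / 4"
  proof -
    have "(\<lambda>N. \<Sum>j<4. \<Sum>n<N. ff n j t) \<longlonglongrightarrow> (\<Sum>j<4. Gr lam p c a b j t)"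
      by (rule tendsto_sum) (rule ff_lim, auto simp: t)
    then show ?thesis by (rule tendsto_divide) auto
  qed
  moreover have "(\<lambda>N. \<Sum>n<N. (\<integral>\<omega>. H c a b n (D0 \<omega> mod 4) t (\<lambda>k. \<tau> k \<omega>) (\<lambda>k. \<xi> k \<omega>) \<partial>M)) = (\<lambda>N. (\<Sum>j<4. \<Sum>n<N. ff n j t) / 4)"
  proof
    fix N
    show "(\<Sum>n<N. (\<integral>\<omega>. H c a b n (D0 \<omega> mod 4) t (\<lambda>k. \<tau> k \<omega>) (\<lambda>k. \<xi> k \<omega>) \<partial>M)) = (\<Sum>j<4. \<Sum>n<N. ff n j t) / 4"
      unfolding E_H sum_divide_distrib[symmetric] by (rule arg_cong[where f="\<lambda>x. x / 4"], rule sum.swap)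
  qed
  ultimately show ?thesis by simp
qed

end

lemma phi_same: "0 < \<mu> \<Longrightarrow> phi (of_real \<mu>) \<mu> t = 2 * of_real (exp (\<mu> * t))"
  by (simp add: phi_def exp_of_real[symmetric])

lemma Gr_zero_sum:
  assumes lam: "0 < lam" and p: "0 < p" "p < 1"
  shows "(\<Sum>j<4. Gr lam p c 0 0 j t) / 4 = 1"
proof -
  have A: "Afun lam p c 0 0 = of_real (lam * p)"
  proof -
    have "sqrt (4 * lam^2 * p^2) = 2 * (lam * p)"
      using lam p by (simp add: real_sqrt_mult power_mult_distrib[symmetric])
    then show ?thesis unfolding Afun_def by (simp add: csqrt_of_real)
  qed
  have B: "Bfun lam p c 0 0 = of_real (lam * (1 - p))"
  proof -
    have "sqrt (4 * lam^2 * (1 - p)^2) = 2 * (lam * (1 - p))"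
      using lam p by (simp add: real_sqrt_mult power_mult_distrib[symmetric])
    then show ?thesis unfolding Bfun_def by (simp add: csqrt_of_real)
  qed
  have "(\<Sum>j<4. Gr lam p c 0 0 j t) / 4 = of_real (exp (- lam * t) / 4) * (2 * of_real (exp (lam * p * t))) * (2 * of_real (exp (lam * (1 - p) * t)))"
  proof -
    have l1: "0 < lam * p" and l2: "0 < lam * (1 - p)" using lam p by auto
    show ?thesis unfolding final_formula A B phi_same[OF l1] phi_same[OF l2] by (simp add: mult_ac)
  qed
  also have "\<dots> = of_real (exp (- lam * t) * exp (lam * p * t) * exp (lam * (1 - p) * t))" by simp
  also have "exp (- lam * t) * exp (lam * p * t) * exp (lam * (1 - p) * t) = 1"
    by (simp flip: exp_add add: algebra_simps)
  finally show ?thesis by simp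
qed

lemma H_zero: "H c 0 0 n j t \<tau> x = (if ev n t \<tau> then 1 else 0)"
  by (simp add: H_explicit phase_def th_def)

theorem mainTheorem1:
  fixes M :: "'a measure" and lam c p \<alpha> \<beta> t :: real
    and D0 :: "'a \<Rightarrow> nat" and \<tau> :: "nat \<Rightarrow> 'a \<Rightarrow> real" and \<xi> :: "nat \<Rightarrow> 'a \<Rightarrow> bool"
  assumes "prob_space M"
    and "lam > 0" and "c > 0" and "0 < p" and "p < 1"
    and "D0 \<in> measurable M (count_space UNIV)"
    and "\<forall>k. \<tau> k \<in> borel_measurable M"
    and "\<forall>k. \<xi> k \<in> measurable M (count_space UNIV)"
    and "prob_space.indep_vars M (\<lambda>_. borel) (src_rv D0 \<tau> \<xi>) UNIV"
    and "\<forall>j<4. measure M {\<omega> \<in> space M. D0 \<omega> = j} = 1/4"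
    and "\<forall>k. distributed M lborel (\<tau> k) (exponential_density lam)"
    and "\<forall>k. measure M {\<omega> \<in> space M. \<xi> k \<omega>} = p"
    and "t > 0"
  shows "(LINT \<omega>|M. cis (\<alpha> * posX c D0 \<tau> \<xi> t \<omega> + \<beta> * posY c D0 \<tau> \<xi> t \<omega>))
       = of_real (exp (- lam * t) / 4)
         * phi (Afun lam p c \<alpha> \<beta>) (lam * p) t
         * phi (Bfun lam p c \<alpha> \<beta>) (lam * (1 - p)) t"
proof -
  interpret prob_space M by (rule assms(1))
  interpret A: orw M lam p c \<alpha> \<beta> D0 \<tau> \<xi>
    by unfold_locales (use assms in auto)
  interpret Z: orw M lam p c 0 0 D0 \<tau> \<xi>
    by unfold_locales (use assms in auto)
  have lam: "0 < lam" and t: "0 < t" and D0m[measurable]: "D0 \<in> measurable M (count_space UNIV)"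
    using assms by auto
  have taum[measurable]: "\<tau> k \<in> borel_measurable M" for k using assms by auto
  have xim[measurable]: "\<xi> k \<in> measurable M (count_space UNIV)" for k using assms by auto
  have AEpos: "AE \<omega> in M. \<forall>k. 0 < \<tau> k \<omega>"
  proof (subst AE_all_countable, intro allI)
    fix k
    have "prob {\<omega> \<in> space M. 0 < \<tau> k \<omega>} = 1"
      using exponential_distributedD_gt[of "\<tau> k" lam 0] assms lam by simp
    from AE_prob_1[OF this] show "AE \<omega> in M. 0 < \<tau> k \<omega>" by eventually_elim auto
  qed
  define E where "E n = {\<omega> \<in> space M. ev n t (\<lambda>k. \<tau> k \<omega>)}" for n
  have Eev: "E n \<in> events" for n unfolding E_def ev_def by measurable
  have Edisj: "disjoint_family E"
    unfolding disjoint_family_on_def E_def using ev_unique by blast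
  have EH: "(\<integral>\<omega>. H c 0 0 n (D0 \<omega> mod 4) t (\<lambda>k. \<tau> k \<omega>) (\<lambda>k. \<xi> k \<omega>) \<partial>M) = of_real (prob (E n))" for n
  proof -
    have "(\<integral>\<omega>. H c 0 0 n (D0 \<omega> mod 4) t (\<lambda>k. \<tau> k \<omega>) (\<lambda>k. \<xi> k \<omega>) \<partial>M) = (\<integral>\<omega>. of_real (indicator (E n) \<omega>) \<partial>M)"
      by (intro Bochner_Integration.integral_cong) (auto simp: H_zero E_def indicator_def)
    then show ?thesis using Eev[of n] by (simp add: Int_absorb2 sets.sets_into_space)
  qed
  have "(\<lambda>N. \<Sum>n<N. of_real (prob (E n)) :: complex) \<longlonglongrightarrow> 1"
    using Z.series[of t] t Gr_zero_sum[OF lam assms(4,5), of c t] by (simp add: EH)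
  then have "(\<lambda>N. of_real (\<Sum>n<N. prob (E n)) :: complex) \<longlonglongrightarrow> of_real 1" by simp
  then have "(\<lambda>N. \<Sum>n<N. prob (E n)) \<longlonglongrightarrow> 1" by (simp only: tendsto_of_real_iff)
  then have s1: "(\<lambda>n. prob (E n)) sums 1" by (simp add: sums_def)
  have "(\<lambda>n. prob (E n)) sums prob (\<Union>n. E n)"
    by (rule measure_UNION) (auto simp: Eev Edisj)
  then have "prob (\<Union>n. E n) = 1" using s1 sums_unique2 by blast
  from AE_prob_1[OF this] have AEfin: "AE \<omega> in M. \<exists>n. ev n t (\<lambda>k. \<tau> k \<omega>)"
    by eventually_elim (auto simp: E_def)
  define W where "W \<omega> = cis (\<alpha> * posX c D0 \<tau> \<xi> t \<omega> + \<beta> * posY c D0 \<tau> \<xi> t \<omega>)" for \<omega>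
  define S where "S N \<omega> = (\<Sum>n<N. H c \<alpha> \<beta> n (D0 \<omega> mod 4) t (\<lambda>k. \<tau> k \<omega>) (\<lambda>k. \<xi> k \<omega>))" for N \<omega>
  have Wm: "W \<in> borel_measurable M" unfolding W_def[abs_def] by (rule W_meas) simp_all
  have Hm: "(\<lambda>\<omega>. H c \<alpha> \<beta> n (D0 \<omega> mod 4) t (\<lambda>k. \<tau> k \<omega>) (\<lambda>k. \<xi> k \<omega>)) \<in> borel_measurable M" for n
  proof (rule measurable_compose_countable[where f="\<lambda>i \<omega>. H c \<alpha> \<beta> n i t (\<lambda>k. \<tau> k \<omega>) (\<lambda>k. \<xi> k \<omega>)"])
    fix i show "(\<lambda>\<omega>. H c \<alpha> \<beta> n i t (\<lambda>k. \<tau> k \<omega>) (\<lambda>k. \<xi> k \<omega>)) \<in> borel_measurable M"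
      by (rule H_meas) simp_all
  qed measurable
  have Sm: "S N \<in> borel_measurable M" for N unfolding S_def[abs_def] using Hm by measurable
  have lim: "AE \<omega> in M. (\<lambda>N. S N \<omega>) \<longlonglongrightarrow> W \<omega>"
    using AEpos AEfin
  proof eventually_elim
    fix \<omega> assume pos: "\<forall>k. 0 < \<tau> k \<omega>" and "\<exists>n. ev n t (\<lambda>k. \<tau> k \<omega>)"
    then obtain n0 where n0: "ev n0 t (\<lambda>k. \<tau> k \<omega>)" by blast
    have "W \<omega> = H c \<alpha> \<beta> n0 (D0 \<omega> mod 4) t (\<lambda>k. \<tau> k \<omega>) (\<lambda>k. \<xi> k \<omega>)"
    proof -
      have "\<alpha> * posX c D0 \<tau> \<xi> t \<omega> + \<beta> * posY c D0 \<tau> \<xi> t \<omega> = phase c \<alpha> \<beta> n0 (D0 \<omega> mod 4) t (\<lambda>k. \<tau> k \<omega>) (\<lambda>k. \<xi> k \<omega>)"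
        by (rule pos_eval) (use pos n0 in auto)
      then show ?thesis unfolding W_def using n0 by (simp add: H_explicit)
    qed
    then have "eventually (\<lambda>N. S N \<omega> = W \<omega>) sequentially"
      unfolding S_def sum_H[OF n0] eventually_sequentially by (intro exI[of _ "Suc n0"]) auto
    then show "(\<lambda>N. S N \<omega>) \<longlonglongrightarrow> W \<omega>" by (rule tendsto_eventually)
  qed
  have "(\<lambda>N. integral\<^sup>L M (S N)) \<longlonglongrightarrow> integral\<^sup>L M W"
    by (rule integral_dominated_convergence[OF Wm Sm _ lim, where w="\<lambda>_. 1"]) (auto simp: S_def norm_sum_H)
  moreover have "integral\<^sup>L M (S N) = (\<Sum>n<N. (\<integral>\<omega>. H c \<alpha> \<beta> n (D0 \<omega> mod 4) t (\<lambda>k. \<tau> k \<omega>) (\<lambda>k. \<xi> k \<omega>) \<partial>M))" for N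
    unfolding S_def
    by (rule Bochner_Integration.integral_sum) (rule integrable_const_bound[where B=1], auto simp: norm_H_le Hm)
  ultimately have "(\<lambda>N. \<Sum>n<N. (\<integral>\<omega>. H c \<alpha> \<beta> n (D0 \<omega> mod 4) t (\<lambda>k. \<tau> k \<omega>) (\<lambda>k. \<xi> k \<omega>) \<partial>M)) \<longlonglongrightarrow> integral\<^sup>L M W"
    by simp
  moreover have "(\<lambda>N. \<Sum>n<N. (\<integral>\<omega>. H c \<alpha> \<beta> n (D0 \<omega> mod 4) t (\<lambda>k. \<tau> k \<omega>) (\<lambda>k. \<xi> k \<omega>) \<partial>M)) \<longlonglongrightarrow> (\<Sum>j<4. Gr lam p c \<alpha> \<beta> j t) / 4"
    using A.series t by simp
  ultimately have "integral\<^sup>L M W = (\<Sum>j<4. Gr lam p c \<alpha> \<beta> j t) / 4" by (rule LIMSEQ_unique)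
  then show ?thesis unfolding W_def final_formula .
qed

end
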